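(* Consider $N$ agents with dynamics $p_i^{(k+1)}=p_i^{(k)}+v_i^{(k)}$, $v_i^{(k+1)}=v_i^{(k)}+u_i^{(k)}$ and control law $u_i^{(k)}=\sum_{j}\gamma_1a_{ij}^{(k)}(p_j^{(k)}-p_i^{(k)})+\gamma_2a_{ij}^{(k)}(v_j^{(k)}-v_i^{(k)})$. Let $\mathcal{A}^{(0)}=(a_{ij}^{(0)})$ be a symmetric nonnegative matrix with zero diagonal whose graph is connected, and assume $\gamma_2>\gamma_1>0$ and $\gamma_1-2\gamma_2>-4/\mu_i^{(0)}$ for every nonzero eigenvalue $\mu_i^{(0)}$ of the Laplacian $L^{(0)}$ of $\mathcal{A}^{(0)}$. Then there exists $\delta_A>0$ with $\delta_A<\min\{a_{ij}^{(0)}: a_{ij}^{(0)}>0\}$ such that the following holds: if for every $k\ge0$ and every edge $\{i,j\}$ (i.e. $a_{ij}^{(0)}>0$) the weight is $a_{ij}^{(k)}=a_{ji}^{(k)}=\alpha_{i,j}^{(k)}\alpha_{j,i}^{(k)}$ for arbitrary numbers $\alpha_{i,j}^{(k)},\alpha_{j,i}^{(k)}\in\big(\sqrt{a_{ij}^{(0)}-\delta_A},\sqrt{a_{ij}^{(0)}+\delta_A}\big)$, and $a_{ij}^{(k)}=0$ for non-edges, then the agents reach consensus for every initial condition: $p_i^{(k)}-p_j^{(k)}\to0$ and $v_i^{(k)}-v_j^{(k)}\to0$ as $k\to\infty$ for all $i,j$.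
   Context: The Laplacian $L=(l_{ij})$ of a symmetric nonnegative matrix $\mathcal{A}=(a_{ij})$ with zero diagonal is $l_{ij}=-a_{ij}$ for $i\neq j$, $l_{ii}=\sum_{j\neq i}a_{ij}$. The factorization of each weight into two random factors, each held privately by one endpoint, models the decoupled-weight scheme used together with Paillier encryption; the values of the factors may be arbitrary within the stated intervals. *)

theory Defs
  imports Complex_Main
begin

text \<open>Agents are indexed by 0..N-1; a weight matrix is a function nat => nat => real,
only its entries with indices below N are relevant.\<close>

definition laplacian :: "nat \<Rightarrow> (nat \<Rightarrow> nat \<Rightarrow> real) \<Rightarrow> nat \<Rightarrow> nat \<Rightarrow> real" where
  "laplacian N A i j = (if i = j then (\<Sum>l\<in>{..<N} - {i}. A i l) else - A i j)"

definition lap_eigenvalue :: "nat \<Rightarrow> (nat \<Rightarrow> nat \<Rightarrow> real) \<Rightarrow> real \<Rightarrow> bool" where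
  "lap_eigenvalue N A \<mu> \<longleftrightarrow>
     (\<exists>x :: nat \<Rightarrow> real. (\<exists>i<N. x i \<noteq> 0) \<and>
        (\<forall>i<N. (\<Sum>j<N. laplacian N A i j * x j) = \<mu> * x i))"

definition graph_connected :: "nat \<Rightarrow> (nat \<Rightarrow> nat \<Rightarrow> real) \<Rightarrow> bool" where
  "graph_connected N A \<longleftrightarrow>
     (\<forall>i<N. \<forall>j<N. (\<lambda>a b. a < N \<and> b < N \<and> A a b > 0)\<^sup>*\<^sup>* i j)"

end

theory Submission
  imports Defs "HOL-Analysis.Analysis"
begin

lemma sphere_max:
  fixes f :: "(nat \<Rightarrow> real) \<Rightarrow> real" and C :: "(nat \<Rightarrow> real) set"
  assumes f: "continuous_on UNIV f" and C: "closed C"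
    and ne: "S \<noteq> {}"
    and S: "S = {x. (\<forall>i\<ge>N. x i = 0) \<and> (\<Sum>i<N. (x i)^2) = 1} \<inter> C"
  shows "\<exists>x\<in>S. \<forall>y\<in>S. f y \<le> f x"
proof -
  define K where "K = PiE UNIV (\<lambda>i::nat. if i < N then {-1..1::real} else {0})"
  have "compactin (product_topology (\<lambda>i. euclidean) UNIV) K"
    unfolding K_def by (simp only: compactin_PiE) (auto simp: compactin_euclidean_iff)
  hence cK: "compact K" by (simp add: euclidean_product_topology compactin_euclidean_iff)
  have cl1: "closed {x::nat\<Rightarrow>real. \<forall>i\<ge>N. x i = 0}"
  proof -
    have "{x::nat\<Rightarrow>real. \<forall>i\<ge>N. x i = 0} = (\<Inter>i\<in>{N..}. {x. x i = 0})" by auto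
    moreover have "closed {x::nat\<Rightarrow>real. x i = 0}" for i
      by (intro closed_Collect_eq continuous_on_product_coordinates continuous_on_const)
    ultimately show ?thesis by auto
  qed
  have cl2: "closed {x::nat\<Rightarrow>real. (\<Sum>i<N. (x i)^2) = 1}"
    by (intro closed_Collect_eq continuous_on_sum continuous_on_power continuous_on_product_coordinates continuous_on_const)
  have sub: "S \<subseteq> K"
  proof
    fix x assume "x \<in> S"
    hence z: "\<forall>i\<ge>N. x i = 0" and s: "(\<Sum>i<N. (x i)^2) = 1" using S by auto
    have "x i \<in> (if i < N then {-1..1} else {0})" for i
    proof (cases "i < N")
      case True
      have "(x i)^2 \<le> (\<Sum>i<N. (x i)^2)" by (rule member_le_sum) (use True in auto)
      hence "(x i)^2 \<le> 1" using s by simp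
      hence "\<bar>x i\<bar> \<le> 1" by (simp add: abs_square_le_1)
      thus ?thesis using True by auto
    qed (use z in auto)
    thus "x \<in> K" unfolding K_def by auto
  qed
  have "S = K \<inter> ({x. \<forall>i\<ge>N. x i = 0} \<inter> {x. (\<Sum>i<N. (x i)^2) = 1} \<inter> C)"
    using sub S by auto
  moreover have "closed ({x::nat\<Rightarrow>real. \<forall>i\<ge>N. x i = 0} \<inter> {x. (\<Sum>i<N. (x i)^2) = 1} \<inter> C)"
    using cl1 cl2 C by (intro closed_Int)
  ultimately have "compact S" using compact_Int_closed[OF cK] by simp
  moreover have "continuous_on S f" using f continuous_on_subset by blast
  ultimately show ?thesis using ne continuous_attains_sup by blast
qed

definition ip :: "nat \<Rightarrow> (nat\<Rightarrow>real) \<Rightarrow> (nat\<Rightarrow>real) \<Rightarrow> real" where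
  "ip N x y = (\<Sum>i<N. x i * y i)"
definition lap :: "nat \<Rightarrow> (nat\<Rightarrow>nat\<Rightarrow>real) \<Rightarrow> (nat\<Rightarrow>real) \<Rightarrow> (nat\<Rightarrow>real)" where
  "lap N W x = (\<lambda>i. if i < N then (\<Sum>j<N. W i j * (x i - x j)) else 0)"
definition symm :: "nat \<Rightarrow> (nat\<Rightarrow>nat\<Rightarrow>real) \<Rightarrow> bool" where
  "symm N W \<longleftrightarrow> (\<forall>i<N. \<forall>j<N. W i j = W j i)"

lemma ip_comm: "ip N x y = ip N y x"
  by (simp add: ip_def mult.commute)

lemma ip_lin_left: "ip N (\<lambda>i. a * x i + b * y i) z = a * ip N x z + b * ip N y z"
  by (simp add: ip_def algebra_simps sum.distrib sum_distrib_left)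

lemma ip_lin_right: "ip N z (\<lambda>i. a * x i + b * y i) = a * ip N z x + b * ip N z y"
  by (simp add: ip_def algebra_simps sum.distrib sum_distrib_left)

lemma ip_add_left: "ip N (\<lambda>i. x i + y i) z = ip N x z + ip N y z"
  by (simp add: ip_def algebra_simps sum.distrib)
lemma ip_add_right: "ip N z (\<lambda>i. x i + y i) = ip N z x + ip N z y"
  by (simp add: ip_def algebra_simps sum.distrib)
lemma ip_diff_left: "ip N (\<lambda>i. x i - y i) z = ip N x z - ip N y z"
  by (simp add: ip_def algebra_simps sum_subtractf)
lemma ip_diff_right: "ip N z (\<lambda>i. x i - y i) = ip N z x - ip N z y"
  by (simp add: ip_def algebra_simps sum_subtractf)
lemma ip_scale_left: "ip N (\<lambda>i. a * x i) z = a * ip N x z"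
  by (simp add: ip_def algebra_simps sum_distrib_left)
lemma ip_scale_right: "ip N z (\<lambda>i. a * x i) = a * ip N z x"
  by (simp add: ip_def algebra_simps sum_distrib_left)

lemma ip_self_nonneg: "0 \<le> ip N x x"
  by (simp add: ip_def sum_nonneg)

lemma lap_add: "lap N W (\<lambda>i. x i + y i) = (\<lambda>i. lap N W x i + lap N W y i)"
proof (rule ext)
  fix i
  have "(\<Sum>j<N. W i j * (x i + y i - (x j + y j))) = (\<Sum>j<N. W i j * (x i - x j) + W i j * (y i - y j))"
    by (intro sum.cong) (auto simp: algebra_simps)
  thus "lap N W (\<lambda>i. x i + y i) i = lap N W x i + lap N W y i"
    by (simp add: lap_def sum.distrib)
qed
lemma lap_diff: "lap N W (\<lambda>i. x i - y i) = (\<lambda>i. lap N W x i - lap N W y i)"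
proof (rule ext)
  fix i
  have "(\<Sum>j<N. W i j * (x i - y i - (x j - y j))) = (\<Sum>j<N. W i j * (x i - x j) - W i j * (y i - y j))"
    by (intro sum.cong) (auto simp: algebra_simps)
  thus "lap N W (\<lambda>i. x i - y i) i = lap N W x i - lap N W y i"
    by (simp add: lap_def sum_subtractf)
qed
lemma lap_scale: "lap N W (\<lambda>i. a * x i) = (\<lambda>i. a * lap N W x i)"
  by (auto simp add: lap_def algebra_simps sum_distrib_left)
lemma lap_shift: "lap N W (\<lambda>i. x i - m) = lap N W x"
  by (auto simp add: lap_def)
lemma lap_Wdiff: "lap N (\<lambda>i j. W' i j - W i j) x = (\<lambda>i. lap N W' x i - lap N W x i)"
proof (rule ext)
  fix i
  have "(\<Sum>j<N. (W' i j - W i j) * (x i - x j)) = (\<Sum>j<N. W' i j * (x i - x j) - W i j * (x i - x j))"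
    by (intro sum.cong) (auto simp: algebra_simps)
  thus "lap N (\<lambda>i j. W' i j - W i j) x i = lap N W' x i - lap N W x i"
    by (simp add: lap_def sum_subtractf)
qed

lemma ip_lap: "ip N y (lap N W x) = (\<Sum>i<N. \<Sum>j<N. W i j * y i * (x i - x j))"
  unfolding ip_def lap_def by (auto intro!: sum.cong simp: sum_distrib_left mult_ac)

lemma swap_sym:
  assumes "symm N W"
  shows "(\<Sum>i<N. \<Sum>j<N. W i j * f i j) = (\<Sum>i<N. \<Sum>j<N. W i j * f j i)"
proof -
  have "(\<Sum>i<N. \<Sum>j<N. W i j * f i j) = (\<Sum>j<N. \<Sum>i<N. W i j * f i j)"
    by (rule sum.swap)
  also have "\<dots> = (\<Sum>j<N. \<Sum>i<N. W j i * f i j)"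
    using assms unfolding symm_def by (intro sum.cong refl) auto
  finally show ?thesis .
qed

lemma lap_sym:
  assumes "symm N W"
  shows "ip N y (lap N W x) = ip N x (lap N W y)"
proof -
  have "(\<Sum>i<N. \<Sum>j<N. W i j * (y i * x j)) = (\<Sum>i<N. \<Sum>j<N. W i j * (y j * x i))"
    by (rule swap_sym[OF assms])
  hence "(\<Sum>i<N. \<Sum>j<N. W i j * y i * x j) = (\<Sum>i<N. \<Sum>j<N. W i j * x i * y j)"
    by (simp add: mult_ac)
  thus ?thesis unfolding ip_lap
    by (simp add: algebra_simps sum_subtractf)
qed

lemma lap_quad:
  assumes "symm N W"
  shows "ip N x (lap N W x) = (\<Sum>i<N. \<Sum>j<N. W i j * (x i - x j)^2) / 2"
proof -
  have e: "(\<Sum>i<N. \<Sum>j<N. W i j * (x i * (x i - x j))) = (\<Sum>i<N. \<Sum>j<N. W i j * (x j * (x j - x i)))"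
    by (rule swap_sym[OF assms])
  have "(\<Sum>i<N. \<Sum>j<N. W i j * (x i - x j)^2) =
        (\<Sum>i<N. \<Sum>j<N. W i j * (x i * (x i - x j))) + (\<Sum>i<N. \<Sum>j<N. W i j * (x j * (x j - x i)))"
    by (simp add: sum.distrib[symmetric] power2_eq_square algebra_simps)
  also have "\<dots> = 2 * (\<Sum>i<N. \<Sum>j<N. W i j * x i * (x i - x j))"
    using e by (simp add: mult_ac)
  finally show ?thesis unfolding ip_lap by simp
qed

lemma lap_sum0:
  assumes "symm N W"
  shows "(\<Sum>i<N. lap N W x i) = 0"
proof -
  have "(\<Sum>i<N. \<Sum>j<N. W i j * (x i - x j)) = (\<Sum>i<N. \<Sum>j<N. W i j * (x j - x i))"
    by (rule swap_sym[OF assms])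
  hence "(\<Sum>i<N. \<Sum>j<N. W i j * (x i - x j)) = 0"
    by (simp add: algebra_simps sum_subtractf)
  thus ?thesis unfolding lap_def by simp
qed

lemma disc:
  fixes a b c :: real
  assumes "\<And>t. 0 \<le> a + 2*b*t + c*t^2" and c0: "0 \<le> c"
  shows "b^2 \<le> a*c"
proof (cases "c = 0")
  case True
  have "b = 0"
  proof (rule ccontr)
    assume "b \<noteq> 0"
    have "0 \<le> a + 2*b*(-(a+1)/(2*b)) + c*(-(a+1)/(2*b))^2" by (rule assms)
    also have "\<dots> = -1" using True \<open>b \<noteq> 0\<close> by (simp add: field_simps)
    finally show False by simp
  qed
  thus ?thesis using True by simp
next
  case False
  hence c: "c > 0" using c0 by simp
  have "0 \<le> a + 2*b*(-b/c) + c*(-b/c)^2" by (rule assms)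
  also have "\<dots> = a - b^2/c" using c by (simp add: field_simps power2_eq_square)
  finally have "b^2/c \<le> a" by simp
  thus ?thesis using c by (simp add: field_simps mult.commute)
qed

lemma ip_cs: "(ip N x y)^2 \<le> ip N x x * ip N y y"
proof (rule disc)
  fix t
  have "0 \<le> ip N (\<lambda>i. x i + t * y i) (\<lambda>i. x i + t * y i)" by (rule ip_self_nonneg)
  also have "\<dots> = ip N x x + 2 * ip N x y * t + ip N y y * t^2"
    by (simp add: ip_add_left ip_add_right ip_scale_left ip_scale_right ip_comm[of N y x] power2_eq_square algebra_simps)
  finally show "0 \<le> ip N x x + 2 * ip N x y * t + ip N y y * t^2" .
qed (rule ip_self_nonneg)

lemma quad_nonneg:
  assumes "symm N W" "\<forall>i<N. \<forall>j<N. W i j \<ge> 0"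
  shows "0 \<le> ip N x (lap N W x)"
  unfolding lap_quad[OF assms(1)] using assms(2) by (auto intro!: sum_nonneg)

lemma psd_cs:
  assumes "symm N W" "\<forall>i<N. \<forall>j<N. W i j \<ge> 0"
  shows "(ip N x (lap N W y))^2 \<le> ip N x (lap N W x) * ip N y (lap N W y)"
proof (rule disc)
  fix t
  have "0 \<le> ip N (\<lambda>i. x i + t * y i) (lap N W (\<lambda>i. x i + t * y i))" by (rule quad_nonneg[OF assms])
  also have "\<dots> = ip N x (lap N W x) + 2 * ip N x (lap N W y) * t + ip N y (lap N W y) * t^2"
    by (simp add: lap_add lap_scale ip_add_left ip_add_right ip_scale_left ip_scale_right
        lap_sym[OF assms(1), of y x] power2_eq_square algebra_simps)
  finally show "0 \<le> ip N x (lap N W x) + 2 * ip N x (lap N W y) * t + ip N y (lap N W y) * t^2" .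
qed (rule quad_nonneg[OF assms])

lemma young:
  assumes "d > 0"
  shows "2 * \<bar>ip N u w\<bar> \<le> d * ip N u u + ip N w w / d"
proof -
  have "0 \<le> ip N (\<lambda>i. d * u i - w i) (\<lambda>i. d * u i - w i)" by (rule ip_self_nonneg)
  also have "\<dots> = d*d*ip N u u - 2*d*ip N u w + ip N w w"
    by (simp add: ip_diff_left ip_diff_right ip_scale_left ip_scale_right ip_comm[of N w u] algebra_simps)
  finally have 1: "2*d*ip N u w \<le> d*d*ip N u u + ip N w w" by simp
  have "0 \<le> ip N (\<lambda>i. d * u i + w i) (\<lambda>i. d * u i + w i)" by (rule ip_self_nonneg)
  also have "\<dots> = d*d*ip N u u + 2*d*ip N u w + ip N w w"
    by (simp add: ip_add_left ip_add_right ip_scale_left ip_scale_right ip_comm[of N w u] algebra_simps)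
  finally have 2: "-2*d*ip N u w \<le> d*d*ip N u u + ip N w w" by simp
  have "d * (2 * \<bar>ip N u w\<bar>) \<le> d * (d * ip N u u + ip N w w / d)"
    using 1 2 assms by (auto simp: abs_if algebra_simps)
  thus ?thesis using assms by simp
qed

lemma lap_sq_bound:
  assumes s: "symm N W" and nn: "\<forall>i<N. \<forall>j<N. W i j \<ge> 0"
    and up: "\<forall>y. ip N y (lap N W y) \<le> \<Lambda> * ip N y y" and L0: "\<Lambda> \<ge> 0"
  shows "ip N (lap N W x) (lap N W x) \<le> \<Lambda> * ip N x (lap N W x)"
proof -
  define z where "z = lap N W x"
  have "(ip N x (lap N W z))^2 \<le> ip N x (lap N W x) * ip N z (lap N W z)"
    by (rule psd_cs[OF s nn])
  moreover have "ip N x (lap N W z) = ip N z z" unfolding z_def by (rule lap_sym[OF s])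
  moreover have "ip N z (lap N W z) \<le> \<Lambda> * ip N z z" using up by blast
  moreover have q0: "0 \<le> ip N x (lap N W x)" by (rule quad_nonneg[OF s nn])
  ultimately have "(ip N z z)^2 \<le> ip N x (lap N W x) * (\<Lambda> * ip N z z)"
    by (metis mult_left_mono order_trans)
  hence h: "ip N z z * ip N z z \<le> (\<Lambda> * ip N x (lap N W x)) * ip N z z"
    by (simp add: power2_eq_square mult_ac)
  show ?thesis
  proof (cases "ip N z z = 0")
    case True thus ?thesis using q0 L0 z_def by simp
  next
    case False
    hence "ip N z z > 0" using ip_self_nonneg[of N z] by simp
    thus ?thesis using h z_def by simp
  qed
qed

lemma lap_low_sq:
  assumes low: "c * ip N x x \<le> ip N x (lap N W x)" and c0: "c \<ge> 0"
  shows "c^2 * ip N x x \<le> ip N (lap N W x) (lap N W x)"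
proof -
  have cs: "(ip N x (lap N W x))^2 \<le> ip N x x * ip N (lap N W x) (lap N W x)" by (rule ip_cs)
  have "0 \<le> c * ip N x x" using c0 ip_self_nonneg[of N x] by simp
  hence "(c * ip N x x)^2 \<le> (ip N x (lap N W x))^2" using low by (intro power_mono) auto
  hence h: "ip N x x * (c^2 * ip N x x) \<le> ip N x x * ip N (lap N W x) (lap N W x)"
    using cs by (simp add: power2_eq_square mult_ac)
  show ?thesis
  proof (cases "ip N x x = 0")
    case True thus ?thesis using ip_self_nonneg[of N "lap N W x"] by simp
  next
    case False
    hence "ip N x x > 0" using ip_self_nonneg[of N x] by simp
    thus ?thesis using h by simp
  qed
qed

lemma sum_sq_le: "(\<Sum>j<N. f j)^2 \<le> real N * (\<Sum>j<N. (f j)^2)"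
proof -
  have "(ip N f (\<lambda>_. 1))^2 \<le> ip N f f * ip N (\<lambda>_. 1) (\<lambda>_. 1)" by (rule ip_cs)
  thus ?thesis by (simp add: ip_def power2_eq_square mult_ac)
qed

lemma lap_pert:
  assumes D: "\<forall>i<N. \<forall>j<N. \<bar>D i j\<bar> \<le> d"
  shows "ip N (lap N D x) (lap N D x) \<le> 4 * (real N)^2 * d^2 * ip N x x"
proof -
  have row: "(lap N D x i)^2 \<le> real N * d^2 * (2 * real N * (x i)^2 + 2 * ip N x x)" if i: "i < N" for i
  proof -
    have "(lap N D x i)^2 = (\<Sum>j<N. D i j * (x i - x j))^2" using i by (simp add: lap_def)
    also have "\<dots> \<le> real N * (\<Sum>j<N. (D i j * (x i - x j))^2)" by (rule sum_sq_le)
    also have "\<dots> \<le> real N * (\<Sum>j<N. d^2 * (2 * (x i)^2 + 2 * (x j)^2))"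
    proof (intro mult_left_mono sum_mono)
      fix j assume j: "j \<in> {..<N}"
      have "(D i j)^2 \<le> d^2" using D i j by (metis abs_le_square_iff lessThan_iff abs_ge_zero order_trans abs_of_nonneg)
      moreover have "(x i - x j)^2 \<le> 2 * (x i)^2 + 2 * (x j)^2"
      proof -
        have "2*(x i)^2 + 2*(x j)^2 - (x i - x j)^2 = (x i + x j)^2" by (simp add: power2_eq_square algebra_simps)
        moreover have "0 \<le> (x i + x j)^2" by simp
        ultimately show ?thesis by linarith
      qed
      ultimately show "(D i j * (x i - x j))^2 \<le> d^2 * (2 * (x i)^2 + 2 * (x j)^2)"
        by (simp add: power_mult_distrib mult_mono)
    qed simp
    also have "\<dots> = real N * d^2 * (2 * real N * (x i)^2 + 2 * ip N x x)"
      by (simp add: ip_def sum.distrib sum_distrib_left power2_eq_square algebra_simps)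
    finally show ?thesis .
  qed
  have "ip N (lap N D x) (lap N D x) = (\<Sum>i<N. (lap N D x i)^2)"
    by (simp add: ip_def power2_eq_square)
  also have "\<dots> \<le> (\<Sum>i<N. real N * d^2 * (2 * real N * (x i)^2 + 2 * ip N x x))"
    using row by (intro sum_mono) auto
  also have "\<dots> = 4 * (real N)^2 * d^2 * ip N x x"
    by (simp add: ip_def sum.distrib sum_distrib_left power2_eq_square algebra_simps)
  finally show ?thesis .
qed

definition Vf :: "nat \<Rightarrow> (nat\<Rightarrow>nat\<Rightarrow>real) \<Rightarrow> real \<Rightarrow> real \<Rightarrow> real \<Rightarrow> (nat\<Rightarrow>real) \<Rightarrow> (nat\<Rightarrow>real) \<Rightarrow> real" where
  "Vf N W g1 c2 sg p v = g1 * ip N p (lap N W p) + c2 * ip N (lap N W p) (lap N W p)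
      + 2 * sg * ip N (lap N W p) v + ip N v v"

lemma alg: fixes c2 sg g1 g2 A Bq C XX XY YY vv :: real
 assumes c2: "c2 = sg*(g1+g2) - g1*g2"
 shows "(g1*(A + Bq + Bq + C) + c2*(XX + 2*XY + YY) + 2* sg*(Bq + C - g1*XX - g2*XY - g1*XY - g2*YY) + (vv - 2*g1*Bq - 2*g2*C + g1*g1*XX + 2*g1*g2*XY + g2*g2*YY)) - (g1*A + c2*XX + 2* sg*Bq + vv) = -g1*(2* sg-g1)*XX + (2* sg - (2*g2-g1))*C + (g2*(g2-g1) - sg*(g2-g1))*YY"
  unfolding c2 by (simp add: algebra_simps)

lemma step_identity:
  assumes sy: "symm N W" and c2: "c2 = sg * (g1 + g2) - g1 * g2"
  shows "Vf N W g1 c2 sg (\<lambda>i. p i + v i) (\<lambda>i. v i - (g1 * lap N W p i + g2 * lap N W v i))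
         - Vf N W g1 c2 sg p v =
         - g1 * (2 * sg - g1) * ip N (lap N W p) (lap N W p)
         + (2 * sg - (2*g2 - g1)) * ip N v (lap N W v)
         + (g2*(g2-g1) - sg * (g2-g1)) * ip N (lap N W v) (lap N W v)"
proof -
  define X where "X = lap N W p"
  define Y where "Y = lap N W v"
  have L: "lap N W (\<lambda>i. p i + v i) = (\<lambda>i. X i + Y i)" unfolding X_def Y_def by (rule lap_add)
  have h1: "ip N p Y = ip N v X" unfolding X_def Y_def by (rule lap_sym[OF sy])
  have E1: "ip N (\<lambda>i. p i + v i) (\<lambda>i. X i + Y i) = ip N p X + ip N v X + ip N v X + ip N v Y"
    by (simp only: ip_add_left ip_add_right h1)
  have E2: "ip N (\<lambda>i. X i + Y i) (\<lambda>i. X i + Y i) = ip N X X + 2 * ip N X Y + ip N Y Y"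
    by (simp only: ip_add_left ip_add_right ip_comm[of N Y X]; (simp add: algebra_simps)?)
  have E3: "ip N (\<lambda>i. X i + Y i) (\<lambda>i. v i - (g1 * X i + g2 * Y i)) =
      ip N v X + ip N v Y - g1 * ip N X X - g2 * ip N X Y - g1 * ip N X Y - g2 * ip N Y Y"
    by (simp only: ip_add_left ip_diff_right ip_lin_right ip_comm[of N X v] ip_comm[of N Y v] ip_comm[of N Y X]; (simp add: algebra_simps)?)
  have E4: "ip N (\<lambda>i. v i - (g1 * X i + g2 * Y i)) (\<lambda>i. v i - (g1 * X i + g2 * Y i)) =
      ip N v v - 2 * g1 * ip N v X - 2 * g2 * ip N v Y + g1 * g1 * ip N X X + 2 * g1 * g2 * ip N X Y + g2 * g2 * ip N Y Y"
    by (simp only: ip_diff_left ip_diff_right ip_lin_left ip_lin_right ip_comm[of N X v] ip_comm[of N Y v] ip_comm[of N Y X]; (simp add: algebra_simps)?)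
  have E5: "ip N X v = ip N v X" by (rule ip_comm)
  have goal: "Vf N W g1 c2 sg (\<lambda>i. p i + v i) (\<lambda>i. v i - (g1 * X i + g2 * Y i)) - Vf N W g1 c2 sg p v =
         - g1 * (2 * sg - g1) * ip N X X + (2 * sg - (2*g2 - g1)) * ip N v Y
         + (g2*(g2-g1) - sg * (g2-g1)) * ip N Y Y"
    unfolding Vf_def L E1 E2 E3 E4 E5 X_def[symmetric] by (rule alg[OF c2])
  thus ?thesis unfolding X_def Y_def .
qed

definition good :: "nat \<Rightarrow> real \<Rightarrow> real \<Rightarrow> (nat\<Rightarrow>nat\<Rightarrow>real) \<Rightarrow> bool" where
  "good N \<Lambda> c W \<longleftrightarrow> symm N W \<and> (\<forall>i<N. \<forall>j<N. W i j \<ge> 0) \<and>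
     (\<forall>y. ip N y (lap N W y) \<le> \<Lambda> * ip N y y) \<and>
     (\<forall>y. (\<Sum>i<N. y i) = 0 \<longrightarrow> c * ip N y y \<le> ip N y (lap N W y))"

context
  fixes N :: nat and \<Lambda> c g1 g2 sg c2 :: real
  assumes g1: "g1 > 0" and g12: "g2 > g1" and Lpos: "\<Lambda> > 0" and cpos: "c > 0"
    and sg1: "2 * sg - g1 > 0"
    and c2: "c2 = sg * (g1 + g2) - g1 * g2"
    and l0: "2 * sg - (2*g2 - g1) < 0"
    and l1: "2 * sg - (2*g2 - g1) + \<Lambda> * (g2*(g2-g1) - sg * (g2-g1)) < 0"
    and kap: "g1 + (c2 - sg^2) * \<Lambda> > 0"
begin

lemma step_decrease:
  assumes G: "good N \<Lambda> c W" and p0: "(\<Sum>i<N. p i) = 0" and v0: "(\<Sum>i<N. v i) = 0"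
  shows "Vf N W g1 c2 sg (\<lambda>i. p i + v i) (\<lambda>i. v i - (g1 * lap N W p i + g2 * lap N W v i))
         - Vf N W g1 c2 sg p v \<le>
         - min (g1 * (2 * sg - g1) * c^2) (- max (2 * sg - (2*g2 - g1)) (2 * sg - (2*g2 - g1) + \<Lambda> * (g2*(g2-g1) - sg * (g2-g1))) * c)
           * (ip N p p + ip N v v)"
proof -
  from G have sy: "symm N W" and nn: "\<forall>i<N. \<forall>j<N. W i j \<ge> 0"
    and up: "\<forall>y. ip N y (lap N W y) \<le> \<Lambda> * ip N y y"
    and low: "\<forall>y. (\<Sum>i<N. y i) = 0 \<longrightarrow> c * ip N y y \<le> ip N y (lap N W y)"
    unfolding good_def by auto
  define XX where "XX = ip N (lap N W p) (lap N W p)"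
  define YY where "YY = ip N (lap N W v) (lap N W v)"
  define Cv where "Cv = ip N v (lap N W v)"
  define l0v where "l0v = 2 * sg - (2*g2 - g1)"
  define bet where "bet = g2*(g2-g1) - sg * (g2-g1)"
  define lm where "lm = max l0v (l0v + \<Lambda> * bet)"
  have lm: "lm < 0" using l0 l1 unfolding lm_def l0v_def bet_def by simp
  have lowp: "c * ip N p p \<le> ip N p (lap N W p)" using low p0 by blast
  have lowv: "c * ip N v v \<le> Cv" using low v0 Cv_def by blast
  have XXb: "c^2 * ip N p p \<le> XX" unfolding XX_def by (rule lap_low_sq[OF lowp]) (use cpos in simp)
  have YYb: "YY \<le> \<Lambda> * Cv" unfolding YY_def Cv_def by (rule lap_sq_bound[OF sy nn up]) (use Lpos in simp)
  have Cv0: "0 \<le> Cv" unfolding Cv_def by (rule quad_nonneg[OF sy nn])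
  have t1: "- g1 * (2 * sg - g1) * XX \<le> - (g1 * (2 * sg - g1) * c^2) * ip N p p"
  proof -
    have "0 < g1 * (2 * sg - g1)" using g1 sg1 by simp
    hence "g1 * (2 * sg - g1) * (c^2 * ip N p p) \<le> g1 * (2 * sg - g1) * XX"
      using XXb by (intro mult_left_mono) auto
    thus ?thesis by (simp add: algebra_simps)
  qed
  have t2: "l0v * Cv + bet * YY \<le> lm * Cv"
  proof (cases "bet \<le> 0")
    case True
    have "bet * YY \<le> 0" using True ip_self_nonneg[of N "lap N W v"] unfolding YY_def
      by (simp add: mult_nonpos_nonneg)
    moreover have "l0v * Cv \<le> lm * Cv" using Cv0 unfolding lm_def by (intro mult_right_mono) auto
    ultimately show ?thesis by simp
  next
    case False
    have "bet * YY \<le> bet * (\<Lambda> * Cv)" using False YYb by (intro mult_left_mono) auto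
    moreover have "(l0v + \<Lambda> * bet) * Cv \<le> lm * Cv" using Cv0 unfolding lm_def by (intro mult_right_mono) auto
    ultimately show ?thesis by (simp add: algebra_simps)
  qed
  have t3: "lm * Cv \<le> (lm * c) * ip N v v"
    using lowv lm by (simp add: mult_left_mono_neg mult.assoc)
  have eq: "Vf N W g1 c2 sg (\<lambda>i. p i + v i) (\<lambda>i. v i - (g1 * lap N W p i + g2 * lap N W v i))
         - Vf N W g1 c2 sg p v = - g1 * (2 * sg - g1) * XX + l0v * Cv + bet * YY"
    unfolding XX_def YY_def Cv_def l0v_def bet_def by (rule step_identity[OF sy c2])
  define e1 where "e1 = g1 * (2 * sg - g1) * c^2"
  define e2 where "e2 = - lm * c"
  have "- e1 * ip N p p - e2 * ip N v v \<le> - min e1 e2 * (ip N p p + ip N v v)"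
  proof -
    have "min e1 e2 * ip N p p \<le> e1 * ip N p p" using ip_self_nonneg[of N p] by (intro mult_right_mono) auto
    moreover have "min e1 e2 * ip N v v \<le> e2 * ip N v v" using ip_self_nonneg[of N v] by (intro mult_right_mono) auto
    ultimately show ?thesis by (simp add: algebra_simps)
  qed
  moreover have "- g1 * (2 * sg - g1) * XX + l0v * Cv + bet * YY \<le> - e1 * ip N p p - e2 * ip N v v"
    using t1 t2 t3 unfolding e1_def e2_def by simp
  ultimately show ?thesis unfolding eq e1_def e2_def lm_def l0v_def bet_def by linarith
qed

lemma V_upper:
  assumes G: "good N \<Lambda> c W" and sgpos: "sg > 0"
  shows "Vf N W g1 c2 sg p v \<le> (g1 * \<Lambda> + \<bar>c2\<bar> * \<Lambda>^2 + sg * \<Lambda>^2 + sg + 1) * (ip N p p + ip N v v)"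
proof -
  from G have sy: "symm N W" and nn: "\<forall>i<N. \<forall>j<N. W i j \<ge> 0"
    and up: "\<forall>y. ip N y (lap N W y) \<le> \<Lambda> * ip N y y"
    unfolding good_def by auto
  define X where "X = lap N W p"
  define q where "q = ip N p X"
  define pp where "pp = ip N p p"
  define vv where "vv = ip N v v"
  define XX where "XX = ip N X X"
  have pp0: "0 \<le> pp" and vv0: "0 \<le> vv" and XX0: "0 \<le> XX"
    unfolding pp_def vv_def XX_def by (rule ip_self_nonneg)+
  have q: "q \<le> \<Lambda> * pp" using up unfolding q_def pp_def X_def by blast
  have XXq: "XX \<le> \<Lambda> * q" unfolding XX_def q_def X_def by (rule lap_sq_bound[OF sy nn up]) (use Lpos in simp)
  have XXp: "XX \<le> \<Lambda>^2 * pp"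
  proof -
    have "\<Lambda> * q \<le> \<Lambda> * (\<Lambda> * pp)" using q Lpos by (intro mult_left_mono) auto
    thus ?thesis using XXq by (simp add: power2_eq_square mult.assoc)
  qed
  have y: "2 * \<bar>ip N X v\<bar> \<le> 1 * XX + vv / 1" unfolding XX_def vv_def by (rule young) simp
  have a1: "g1 * q \<le> g1 * \<Lambda> * pp" using q g1 by (simp add: mult.assoc)
  have a2: "c2 * XX \<le> \<bar>c2\<bar> * \<Lambda>^2 * pp"
  proof -
    have "c2 * XX \<le> \<bar>c2\<bar> * XX" using XX0 by (simp add: mult_right_mono)
    also have "\<dots> \<le> \<bar>c2\<bar> * (\<Lambda>^2 * pp)" using XXp by (intro mult_left_mono) auto
    finally show ?thesis by (simp add: mult.assoc)
  qed
  have a3: "2 * sg * ip N X v \<le> sg * \<Lambda>^2 * pp + sg * vv"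
  proof -
    have "2 * sg * ip N X v \<le> sg * (2 * \<bar>ip N X v\<bar>)" using sgpos by (simp add: mult_left_mono)
    also have "\<dots> \<le> sg * (XX + vv)" using y sgpos by (intro mult_left_mono) auto
    also have "\<dots> \<le> sg * (\<Lambda>^2 * pp + vv)" using XXp sgpos by (intro mult_left_mono) auto
    finally show ?thesis by (simp add: algebra_simps)
  qed
  have "Vf N W g1 c2 sg p v = g1 * q + c2 * XX + 2 * sg * ip N X v + vv"
    unfolding Vf_def q_def XX_def X_def vv_def ..
  also have "\<dots> \<le> (g1 * \<Lambda> + \<bar>c2\<bar> * \<Lambda>^2 + sg * \<Lambda>^2) * pp + (sg + 1) * vv"
    using a1 a2 a3 by (simp add: algebra_simps)
  also have "\<dots> \<le> (g1 * \<Lambda> + \<bar>c2\<bar> * \<Lambda>^2 + sg * \<Lambda>^2 + sg + 1) * (pp + vv)"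
  proof -
    have "(g1 * \<Lambda> + \<bar>c2\<bar> * \<Lambda>^2 + sg * \<Lambda>^2) * pp \<le> (g1 * \<Lambda> + \<bar>c2\<bar> * \<Lambda>^2 + sg * \<Lambda>^2 + sg + 1) * pp"
      using pp0 sgpos by (intro mult_right_mono) auto
    moreover have "(sg + 1) * vv \<le> (g1 * \<Lambda> + \<bar>c2\<bar> * \<Lambda>^2 + sg * \<Lambda>^2 + sg + 1) * vv"
      using vv0 g1 Lpos sgpos by (intro mult_right_mono) (auto intro!: add_nonneg_nonneg mult_nonneg_nonneg)
    ultimately show ?thesis by (simp add: algebra_simps)
  qed
  finally show ?thesis unfolding pp_def vv_def .
qed

definition "kp = min g1 (g1 + (c2 - sg^2) * \<Lambda>)"
definition "th = kp * c / (2 * (sg^2 * \<Lambda>^2 + kp * c))"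
definition "eps = min (th / 2) (kp * c / 2)"

lemma kp_pos: "kp > 0" unfolding kp_def using g1 kap by simp
lemma th_pos: "th > 0" unfolding th_def using kp_pos cpos by (simp add: add_nonneg_pos)
lemma eps_pos: "eps > 0" unfolding eps_def using th_pos kp_pos cpos by simp

lemma V_lower:
  assumes G: "good N \<Lambda> c W" and p0: "(\<Sum>i<N. p i) = 0"
  shows "eps * (ip N p p + ip N v v) \<le> Vf N W g1 c2 sg p v"
proof -
  from G have sy: "symm N W" and nn: "\<forall>i<N. \<forall>j<N. W i j \<ge> 0"
    and up: "\<forall>y. ip N y (lap N W y) \<le> \<Lambda> * ip N y y"
    and low: "\<forall>y. (\<Sum>i<N. y i) = 0 \<longrightarrow> c * ip N y y \<le> ip N y (lap N W y)"
    unfolding good_def by auto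
  define X where "X = lap N W p"
  define q where "q = ip N p X"
  define pp where "pp = ip N p p"
  define vv where "vv = ip N v v"
  define XX where "XX = ip N X X"
  define Xv where "Xv = ip N X v"
  define U where "U = ip N (\<lambda>i. v i + sg * X i) (\<lambda>i. v i + sg * X i)"
  have pp0: "0 \<le> pp" and vv0: "0 \<le> vv" and XX0: "0 \<le> XX" and U0: "0 \<le> U"
    unfolding pp_def vv_def XX_def U_def by (rule ip_self_nonneg)+
  have qup: "q \<le> \<Lambda> * pp" using up unfolding q_def pp_def X_def by blast
  have qlow: "c * pp \<le> q" using low p0 unfolding q_def pp_def X_def by blast
  have XXq: "XX \<le> \<Lambda> * q" unfolding XX_def q_def X_def by (rule lap_sq_bound[OF sy nn up]) (use Lpos in simp)
  have XXp: "XX \<le> \<Lambda>^2 * pp"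
  proof -
    have "\<Lambda> * q \<le> \<Lambda> * (\<Lambda> * pp)" using qup Lpos by (intro mult_left_mono) auto
    thus ?thesis using XXq by (simp add: power2_eq_square mult.assoc)
  qed
  have Ueq: "U = vv + 2 * sg * Xv + sg^2 * XX"
    unfolding U_def vv_def Xv_def XX_def
    by (simp add: ip_lin_left ip_lin_right ip_add_left ip_add_right ip_scale_left ip_scale_right
        ip_comm[of N v X] power2_eq_square algebra_simps)
  have W2: "0 \<le> ip N (\<lambda>i. 1 * v i + (2 * sg) * X i) (\<lambda>i. 1 * v i + (2 * sg) * X i)" by (rule ip_self_nonneg)
  have W2eq: "ip N (\<lambda>i. 1 * v i + (2 * sg) * X i) (\<lambda>i. 1 * v i + (2 * sg) * X i) = vv + 4 * sg * Xv + 4 * sg^2 * XX"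
    unfolding vv_def Xv_def XX_def
    by (simp only: ip_lin_left ip_lin_right ip_comm[of N v X]) (simp add: power2_eq_square algebra_simps)
  have vvb: "vv \<le> 2 * U + 2 * (sg^2 * \<Lambda>^2) * pp"
  proof -
    have "vv \<le> 2 * U + 2 * sg^2 * XX" using W2 unfolding W2eq Ueq by (simp add: algebra_simps)
    moreover have "sg^2 * XX \<le> sg^2 * (\<Lambda>^2 * pp)" using XXp by (intro mult_left_mono) auto
    ultimately show ?thesis by (simp add: algebra_simps)
  qed
  have Veq: "Vf N W g1 c2 sg p v = U + g1 * q + (c2 - sg^2) * XX"
    unfolding Vf_def Ueq q_def XX_def X_def vv_def Xv_def by (simp add: algebra_simps)
  have q0: "0 \<le> q" using qlow mult_nonneg_nonneg[OF less_imp_le[OF cpos] pp0] by linarith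
  have kq: "kp * q \<le> g1 * q + (c2 - sg^2) * XX"
  proof (cases "c2 - sg^2 \<ge> 0")
    case True
    have "kp \<le> g1" unfolding kp_def by simp
    hence "kp * q \<le> g1 * q" using q0 by (rule mult_right_mono)
    moreover have "0 \<le> (c2 - sg^2) * XX" using True XX0 by simp
    ultimately show ?thesis by simp
  next
    case False
    have "(c2 - sg^2) * (\<Lambda> * q) \<le> (c2 - sg^2) * XX" using False XXq by (intro mult_left_mono_neg) auto
    moreover have "kp * q \<le> (g1 + (c2 - sg^2) * \<Lambda>) * q" unfolding kp_def using q0 by (intro mult_right_mono) auto
    ultimately show ?thesis by (simp add: algebra_simps)
  qed
  have kq2: "kp * c * pp \<le> kp * q" using qlow kp_pos by (simp add: mult.assoc)
  define m where "m = sg^2 * \<Lambda>^2"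
  have pos: "0 < kp * c" using kp_pos cpos by simp
  have m0: "0 \<le> m" unfolding m_def by simp
  have den: "0 < 2 * (m + kp * c)" using pos m0 by simp
  have th_le: "th \<le> 1/2"
  proof -
    have "th = kp * c / (2 * (m + kp * c))" unfolding th_def m_def ..
    also have "\<dots> \<le> (m + kp * c) / (2 * (m + kp * c))" using den m0 by (intro divide_right_mono) auto
    also have "\<dots> = 1/2" using den by simp
    finally show ?thesis .
  qed
  have thmb: "th * (sg^2 * \<Lambda>^2) \<le> kp * c / 2"
  proof -
    have "th * (sg^2 * \<Lambda>^2) = (kp * c * m) / (2 * (m + kp * c))" unfolding th_def m_def by simp
    also have "\<dots> \<le> (kp * c * (m + kp * c)) / (2 * (m + kp * c))"
      using den pos by (intro divide_right_mono mult_left_mono) auto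
    also have "\<dots> = kp * c / 2" using den by (simp add: field_simps)
    finally show ?thesis .
  qed
  have "th * U \<le> 1 * U" using th_le U0 by (intro mult_right_mono) auto
  hence "th * U \<le> U" by simp
  have "th * vv \<le> th * (2 * U + 2 * (sg^2 * \<Lambda>^2) * pp)"
    using vvb th_pos by (intro mult_left_mono) auto
  hence a: "th * vv \<le> 2 * th * U + 2 * (th * (sg^2 * \<Lambda>^2) * pp)" by (simp add: algebra_simps)
  have b: "th * (sg^2 * \<Lambda>^2) * pp \<le> (kp * c / 2) * pp" using thmb pp0 by (intro mult_right_mono)
  have "th / 2 * vv \<le> th * U + (kp * c / 2) * pp" using a b by linarith
  hence "th / 2 * vv + kp * c / 2 * pp \<le> Vf N W g1 c2 sg p v"
    using Veq kq kq2 \<open>th * U \<le> U\<close> by simp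
  moreover have "eps * (pp + vv) \<le> th / 2 * vv + kp * c / 2 * pp"
  proof -
    have "eps * pp \<le> kp * c / 2 * pp" unfolding eps_def using pp0 by (intro mult_right_mono) auto
    moreover have "eps * vv \<le> th / 2 * vv" unfolding eps_def using vv0 by (intro mult_right_mono) auto
    ultimately show ?thesis by (simp add: algebra_simps)
  qed
  ultimately show ?thesis unfolding pp_def vv_def by simp
qed

definition "K0 = g1 * (1 + 4 * (real N)^2) + \<bar>c2\<bar> * (\<Lambda>^2 + 8 * (real N)^2) + 4 * sg * (real N)^2 + sg + 1"

lemma drift:
  assumes G: "good N \<Lambda> c W" and G': "good N \<Lambda> c W'"
    and D: "\<forall>i<N. \<forall>j<N. \<bar>W' i j - W i j\<bar> \<le> d" and d0: "0 < d" and d1: "d \<le> 1"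
    and sgpos: "sg > 0"
  shows "Vf N W' g1 c2 sg p v - Vf N W g1 c2 sg p v \<le> d * K0 * (ip N p p + ip N v v)"
proof -
  from G have sy: "symm N W" and nn: "\<forall>i<N. \<forall>j<N. W i j \<ge> 0"
    and up: "\<forall>y. ip N y (lap N W y) \<le> \<Lambda> * ip N y y"
    unfolding good_def by auto
  define X where "X = lap N W p"
  define X' where "X' = lap N W' p"
  define Dv where "Dv = (\<lambda>i. X' i - X i)"
  define pp where "pp = ip N p p"
  define vv where "vv = ip N v v"
  define XX where "XX = ip N X X"
  define DD where "DD = ip N Dv Dv"
  define P where "P = 4 * (real N)^2 * d * pp"
  have pp0: "0 \<le> pp" and vv0: "0 \<le> vv" and XX0: "0 \<le> XX" and DD0: "0 \<le> DD"
    unfolding pp_def vv_def XX_def DD_def by (rule ip_self_nonneg)+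
  have Dlap: "Dv = lap N (\<lambda>i j. W' i j - W i j) p" unfolding Dv_def X_def X'_def lap_Wdiff ..
  have DDb: "DD \<le> 4 * (real N)^2 * d^2 * pp" unfolding DD_def Dlap pp_def by (rule lap_pert[OF D])
  have DD1: "DD / d \<le> P"
  proof -
    have "DD / d \<le> (4 * (real N)^2 * d^2 * pp) / d" using DDb d0 by (intro divide_right_mono) auto
    also have "\<dots> = P" unfolding P_def using d0 by (simp add: power2_eq_square)
    finally show ?thesis .
  qed
  have DD2: "DD \<le> P"
  proof -
    have "d^2 \<le> d" using d0 d1 by (simp add: power2_eq_square mult_le_cancel_left1)
    hence "4 * (real N)^2 * pp * d^2 \<le> 4 * (real N)^2 * pp * d" using pp0 by (intro mult_left_mono) auto
    thus ?thesis using DDb unfolding P_def by (simp add: mult_ac)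
  qed
  have P0: "0 \<le> P" unfolding P_def using pp0 d0 by simp
  have XXq: "XX \<le> \<Lambda> * ip N p X" unfolding XX_def X_def by (rule lap_sq_bound[OF sy nn up]) (use Lpos in simp)
  have XXp: "XX \<le> \<Lambda>^2 * pp"
  proof -
    have "ip N p X \<le> \<Lambda> * pp" using up unfolding X_def pp_def by blast
    hence "\<Lambda> * ip N p X \<le> \<Lambda> * (\<Lambda> * pp)" using Lpos by (intro mult_left_mono) auto
    thus ?thesis using XXq by (simp add: power2_eq_square mult.assoc)
  qed
  define Q where "Q = DD / d"
  have DD1': "Q \<le> P" using DD1 unfolding Q_def .
  have y1: "2 * \<bar>ip N p Dv\<bar> \<le> d * pp + Q" unfolding pp_def DD_def Q_def by (rule young[OF d0])
  have y2: "2 * \<bar>ip N X Dv\<bar> \<le> d * XX + Q" unfolding XX_def DD_def Q_def by (rule young[OF d0])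
  have y3: "2 * \<bar>ip N Dv v\<bar> \<le> d * vv + Q" using young[OF d0, of N v Dv] ip_comm[of N Dv v]
    unfolding vv_def DD_def Q_def by simp
  have e1: "ip N p X' - ip N p X = ip N p Dv" unfolding Dv_def by (simp add: ip_diff_right)
  have e2: "ip N X' X' - ip N X X = 2 * ip N X Dv + DD" unfolding DD_def Dv_def
    by (simp add: ip_diff_right ip_diff_left ip_comm[of N X' X] algebra_simps)
  have e3: "ip N X' v - ip N X v = ip N Dv v" unfolding Dv_def by (simp add: ip_diff_left)
  have T1: "2 * (g1 * ip N p Dv) \<le> g1 * (d * pp + P)"
  proof -
    have "2 * ip N p Dv \<le> d * pp + P" using y1 DD1' abs_ge_self[of "ip N p Dv"] by linarith
    hence "g1 * (2 * ip N p Dv) \<le> g1 * (d * pp + P)" using g1 by (intro mult_left_mono) auto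
    thus ?thesis by (simp add: mult_ac)
  qed
  have T2: "c2 * (2 * ip N X Dv + DD) \<le> \<bar>c2\<bar> * (d * \<Lambda>^2 * pp + P + P)"
  proof -
    have "c2 * (2 * ip N X Dv + DD) \<le> \<bar>c2\<bar> * \<bar>2 * ip N X Dv + DD\<bar>"
      by (metis abs_ge_self abs_mult)
    also have "\<dots> \<le> \<bar>c2\<bar> * (d * \<Lambda>^2 * pp + P + P)"
    proof (intro mult_left_mono)
      have "d * XX \<le> d * (\<Lambda>^2 * pp)" using XXp d0 by (intro mult_left_mono) auto
      moreover have "\<bar>2 * ip N X Dv + DD\<bar> \<le> \<bar>2 * ip N X Dv\<bar> + \<bar>DD\<bar>" by (rule abs_triangle_ineq)
      moreover have "\<bar>2 * ip N X Dv\<bar> = 2 * \<bar>ip N X Dv\<bar>" by simp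
      ultimately show "\<bar>2 * ip N X Dv + DD\<bar> \<le> d * \<Lambda>^2 * pp + P + P" using y2 DD1' DD2 DD0
        by (simp add: mult.assoc)
    qed simp
    finally show ?thesis .
  qed
  have T3: "2 * (sg * ip N Dv v) \<le> sg * (d * vv + P)"
  proof -
    have "2 * ip N Dv v \<le> d * vv + P" using y3 DD1' abs_ge_self[of "ip N Dv v"] by (smt (verit))
    hence "sg * (2 * ip N Dv v) \<le> sg * (d * vv + P)" using sgpos by (intro mult_left_mono) auto
    thus ?thesis by (simp add: mult_ac)
  qed
  have "Vf N W' g1 c2 sg p v - Vf N W g1 c2 sg p v
      = g1 * (ip N p X' - ip N p X) + c2 * (ip N X' X' - ip N X X) + 2 * sg * (ip N X' v - ip N X v)"
    unfolding Vf_def X_def X'_def by (simp add: algebra_simps)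
  also have "\<dots> = g1 * ip N p Dv + c2 * (2 * ip N X Dv + DD) + 2 * (sg * ip N Dv v)"
    unfolding e1 e2 e3 by simp
  finally have F: "2 * (Vf N W' g1 c2 sg p v - Vf N W g1 c2 sg p v) \<le> g1 * (d * pp + P) + 2 * (\<bar>c2\<bar> * (d * \<Lambda>^2 * pp + P + P)) + 2 * (sg * (d * vv + P))"
    using T1 T2 T3 by (smt (verit))
  have "Vf N W' g1 c2 sg p v - Vf N W g1 c2 sg p v \<le> (g1 * (d * pp + P) + 2 * (\<bar>c2\<bar> * (d * \<Lambda>^2 * pp + P + P)) + 2 * (sg * (d * vv + P))) / 2"
    using F by simp
  also have "\<dots> = d * ((g1 * (1 + 4 * (real N)^2) / 2 + \<bar>c2\<bar> * (\<Lambda>^2 + 8 * (real N)^2) + 4 * sg * (real N)^2) * pp + sg * vv)"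
    unfolding P_def by (simp add: algebra_simps)
  also have "\<dots> \<le> d * (K0 * (pp + vv))"
  proof (intro mult_left_mono)
    have a: "(g1 * (1 + 4 * (real N)^2) / 2 + \<bar>c2\<bar> * (\<Lambda>^2 + 8 * (real N)^2) + 4 * sg * (real N)^2) \<le> K0"
      unfolding K0_def using g1 sgpos by simp
    have b: "sg \<le> K0" unfolding K0_def using g1 sgpos
      by (simp add: add_nonneg_nonneg)
    show "(g1 * (1 + 4 * (real N)^2) / 2 + \<bar>c2\<bar> * (\<Lambda>^2 + 8 * (real N)^2) + 4 * sg * (real N)^2) * pp + sg * vv \<le> K0 * (pp + vv)"
      using mult_right_mono[OF a pp0] mult_right_mono[OF b vv0] by (simp add: algebra_simps)
  qed (use d0 in simp)
  finally show ?thesis unfolding pp_def vv_def by (simp add: mult.assoc)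
qed

definition "etaC = min (g1 * (2 * sg - g1) * c^2) (- max (2 * sg - (2*g2 - g1)) (2 * sg - (2*g2 - g1) + \<Lambda> * (g2*(g2-g1) - sg * (g2-g1))) * c)"
definition "Kc = g1 * \<Lambda> + \<bar>c2\<bar> * \<Lambda>^2 + sg * \<Lambda>^2 + sg + 1"
definition "ee = min (etaC / Kc) 1"

lemma etaC_pos: "etaC > 0"
proof -
  have "max (2 * sg - (2*g2 - g1)) (2 * sg - (2*g2 - g1) + \<Lambda> * (g2*(g2-g1) - sg * (g2-g1))) < 0"
    using l0 l1 by simp
  hence "max (2 * sg - (2*g2 - g1)) (2 * sg - (2*g2 - g1) + \<Lambda> * (g2*(g2-g1) - sg * (g2-g1))) * c < 0"
    using cpos by (simp add: mult_neg_pos)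
  moreover have "g1 * (2 * sg - g1) * c^2 > 0" using g1 sg1 cpos by simp
  ultimately show ?thesis unfolding etaC_def by simp
qed
lemma Kc_pos: "sg > 0 \<Longrightarrow> Kc > 0"
  unfolding Kc_def using g1 Lpos by (auto intro!: add_pos_nonneg add_nonneg_nonneg)
lemma ee_pos: "sg > 0 \<Longrightarrow> ee > 0" unfolding ee_def using etaC_pos Kc_pos by auto
lemma ee_le1: "ee \<le> 1" unfolding ee_def by auto

lemma one_step:
  assumes G: "good N \<Lambda> c W" and G': "good N \<Lambda> c W'"
    and D: "\<forall>i<N. \<forall>j<N. \<bar>W' i j - W i j\<bar> \<le> d" and d0: "0 < d" and d1: "d \<le> 1"
    and sgpos: "sg > 0" and p0: "(\<Sum>i<N. p i) = 0" and v0: "(\<Sum>i<N. v i) = 0"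
    and dK: "d * K0 \<le> eps * ee / 2"
  shows "Vf N W' g1 c2 sg (\<lambda>i. p i + v i) (\<lambda>i. v i - (g1 * lap N W p i + g2 * lap N W v i))
     \<le> (1 - ee / 2) * Vf N W g1 c2 sg p v"
proof -
  have sy: "symm N W" using G unfolding good_def by auto
  define p' where "p' = (\<lambda>i. p i + v i)"
  define v' where "v' = (\<lambda>i. v i - (g1 * lap N W p i + g2 * lap N W v i))"
  have p'0: "(\<Sum>i<N. p' i) = 0" unfolding p'_def using p0 v0 by (simp add: sum.distrib)
  have v'0: "(\<Sum>i<N. v' i) = 0" unfolding v'_def using v0 lap_sum0[OF sy, of p] lap_sum0[OF sy, of v]
    by (simp add: sum_subtractf sum.distrib sum_distrib_left[symmetric])
  define V where "V = Vf N W g1 c2 sg p v"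
  define V1 where "V1 = Vf N W g1 c2 sg p' v'"
  define V2 where "V2 = Vf N W' g1 c2 sg p' v'"
  define n where "n = ip N p p + ip N v v"
  define n' where "n' = ip N p' p' + ip N v' v'"
  have n0: "0 \<le> n" unfolding n_def using ip_self_nonneg[of N p] ip_self_nonneg[of N v] by simp
  have n'0: "0 \<le> n'" unfolding n'_def using ip_self_nonneg[of N p'] ip_self_nonneg[of N v'] by simp
  have dec: "V1 - V \<le> - etaC * n"
    unfolding V1_def V_def p'_def v'_def n_def etaC_def by (rule step_decrease[OF G p0 v0])
  have upV: "V \<le> Kc * n" unfolding V_def Kc_def n_def by (rule V_upper[OF G sgpos])
  have lowV: "eps * n \<le> V" unfolding V_def n_def by (rule V_lower[OF G p0])
  have lowV1: "eps * n' \<le> V1" unfolding V1_def n'_def by (rule V_lower[OF G p'0])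
  have dr: "V2 - V1 \<le> d * K0 * n'" unfolding V2_def V1_def n'_def by (rule drift[OF G G' D d0 d1 sgpos])
  have V0: "0 \<le> V" using lowV eps_pos n0 by (meson mult_nonneg_nonneg less_imp_le order_trans)
  have V10: "0 \<le> V1" using lowV1 eps_pos n'0 by (meson mult_nonneg_nonneg less_imp_le order_trans)
  have Kc: "Kc > 0" by (rule Kc_pos[OF sgpos])
  have "ee * V \<le> (etaC / Kc) * V" unfolding ee_def using V0 by (intro mult_right_mono) auto
  also have "\<dots> \<le> (etaC / Kc) * (Kc * n)" using upV etaC_pos Kc by (intro mult_left_mono) auto
  also have "\<dots> = etaC * n" using Kc by simp
  finally have "ee * V \<le> etaC * n" .
  hence s1: "V1 \<le> (1 - ee) * V" using dec by (simp add: algebra_simps)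
  have "d * K0 * n' \<le> (eps * ee / 2) * n'" using dK n'0 by (intro mult_right_mono) auto
  also have "\<dots> = (ee / 2) * (eps * n')" by simp
  also have "\<dots> \<le> (ee / 2) * V1" using lowV1 ee_pos[OF sgpos] by (intro mult_left_mono) auto
  finally have "V2 \<le> (1 + ee / 2) * V1" using dr by (simp add: algebra_simps)
  also have "\<dots> \<le> (1 + ee / 2) * ((1 - ee) * V)" using s1 ee_pos[OF sgpos] by (intro mult_left_mono) auto
  also have "\<dots> \<le> (1 - ee / 2) * V"
  proof -
    have "(1 + ee / 2) * (1 - ee) \<le> 1 - ee / 2" by (simp add: algebra_simps power2_eq_square)
    thus ?thesis using V0 by (metis mult.assoc mult_right_mono)
  qed
  finally show ?thesis unfolding V2_def V_def p'_def v'_def .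
qed

lemma sums_zero:
  assumes sy: "symm N W" and p0: "(\<Sum>i<N. p i) = 0" and v0: "(\<Sum>i<N. v i) = 0"
  shows "(\<Sum>i<N. p i + v i) = 0" "(\<Sum>i<N. v i - (g1 * lap N W p i + g2 * lap N W v i)) = 0"
  using p0 v0 lap_sum0[OF sy, of p] lap_sum0[OF sy, of v]
  by (simp_all add: sum_subtractf sum.distrib sum_distrib_left[symmetric])

lemma K0_pos: "sg > 0 \<Longrightarrow> K0 > 0"
proof -
  assume sg: "sg > 0"
  have "0 < g1 * (1 + 4 * (real N)^2)" using g1 by (simp add: add_pos_nonneg)
  moreover have "0 \<le> \<bar>c2\<bar> * (\<Lambda>^2 + 8 * (real N)^2)" by simp
  moreover have "0 \<le> 4 * sg * (real N)^2" using sg by simp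
  ultimately show ?thesis unfolding K0_def using sg by linarith
qed

lemma contraction:
  assumes sgpos: "sg > 0"
  shows "\<exists>\<rho> d \<epsilon>. 0 < d \<and> d \<le> 1 \<and> 0 \<le> \<rho> \<and> \<rho> < 1 \<and> 0 < \<epsilon> \<and>
    (\<forall>W W' p v. good N \<Lambda> c W \<longrightarrow> good N \<Lambda> c W' \<longrightarrow> (\<forall>i<N. \<forall>j<N. \<bar>W' i j - W i j\<bar> \<le> d) \<longrightarrow>
       (\<Sum>i<N. p i) = 0 \<longrightarrow> (\<Sum>i<N. v i) = 0 \<longrightarrow>
       Vf N W' g1 c2 sg (\<lambda>i. p i + v i) (\<lambda>i. v i - (g1 * lap N W p i + g2 * lap N W v i))
         \<le> \<rho> * Vf N W g1 c2 sg p v) \<and>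
    (\<forall>W p v. good N \<Lambda> c W \<longrightarrow> (\<Sum>i<N. p i) = 0 \<longrightarrow> \<epsilon> * (ip N p p + ip N v v) \<le> Vf N W g1 c2 sg p v)"
proof -
  have K0: "K0 > 0" by (rule K0_pos[OF sgpos])
  have ee: "0 < ee" "ee \<le> 1" using ee_pos[OF sgpos] ee_le1 by auto
  define d where "d = min 1 (eps * ee / (2 * K0))"
  have d0: "0 < d" unfolding d_def using K0 ee eps_pos by simp
  have d1: "d \<le> 1" unfolding d_def by simp
  have dK: "d * K0 \<le> eps * ee / 2"
  proof -
    have "d * K0 \<le> (eps * ee / (2 * K0)) * K0" unfolding d_def using K0 by (intro mult_right_mono) auto
    also have "\<dots> = eps * ee / 2" using K0 by simp
    finally show ?thesis .
  qed
  show ?thesis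
    apply (rule exI[of _ "1 - ee / 2"], rule exI[of _ d], rule exI[of _ eps])
    using d0 d1 ee eps_pos one_step[OF _ _ _ d0 d1 sgpos _ _ dK] V_lower by auto
qed

end

lemma sg_choice:
  fixes g1 g2 \<Lambda> :: real
  assumes g1: "g1 > 0" and g12: "g2 > g1" and L: "\<Lambda> > 0" and La: "\<Lambda> * (2*g2 - g1) < 4"
  defines "S \<equiv> (2*g2 - g1 - \<Lambda> * (g2*(g2-g1))) / (2 - \<Lambda> * (g2 - g1))"
  defines "sg \<equiv> (g1/2 + S) / 2"
  shows "sg > 0" "2 * sg - g1 > 0" "2 * sg - (2*g2 - g1) < 0"
    "2 * sg - (2*g2 - g1) + \<Lambda> * (g2*(g2-g1) - sg * (g2-g1)) < 0"
    "g1 + ((sg * (g1 + g2) - g1 * g2) - sg^2) * \<Lambda> > 0"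
proof -
  define Dd where "Dd = 2 - \<Lambda> * (g2 - g1)"
  have "\<Lambda> * (g2 - g1) < \<Lambda> * (2*g2 - g1) / 2" using L g12 g1 by (simp add: field_simps)
  hence Dd: "Dd > 0" unfolding Dd_def using La by simp
  have SD: "S * Dd = 2*g2 - g1 - \<Lambda> * (g2*(g2-g1))" unfolding S_def Dd_def using Dd Dd_def by simp
  have k1: "(S - g1/2) * (2 * Dd) = (g2 - g1) * (4 - \<Lambda> * (2*g2 - g1))"
  proof -
    have "(S - g1/2) * (2 * Dd) = 2 * (S * Dd) - g1 * Dd" by (simp add: algebra_simps)
    also have "\<dots> = 2 * (2*g2 - g1 - \<Lambda> * (g2*(g2-g1))) - g1 * (2 - \<Lambda> * (g2 - g1))" by (simp only: SD, simp add: Dd_def)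
    also have "\<dots> = (g2 - g1) * (4 - \<Lambda> * (2*g2 - g1))" by (simp add: algebra_simps)
    finally show ?thesis .
  qed
  have "(g2 - g1) * (4 - \<Lambda> * (2*g2 - g1)) > 0" using g12 La by simp
  hence S1: "S > g1/2" using k1 Dd by (metis mult_pos_pos zero_less_mult_pos2 diff_gt_0_iff_gt mult.commute  mult_2 add_pos_pos)
  have k2: "((2*g2 - g1)/2 - S) * (2 * Dd) = \<Lambda> * (g2 - g1) * g1"
  proof -
    have "((2*g2 - g1)/2 - S) * (2 * Dd) = (2*g2 - g1) * Dd - 2 * (S * Dd)" by (simp add: field_simps)
    also have "\<dots> = (2*g2 - g1) * (2 - \<Lambda> * (g2 - g1)) - 2 * (2*g2 - g1 - \<Lambda> * (g2*(g2-g1)))" by (simp only: SD, simp add: Dd_def)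
    also have "\<dots> = \<Lambda> * (g2 - g1) * g1" by (simp add: algebra_simps)
    finally show ?thesis .
  qed
  have "\<Lambda> * (g2 - g1) * g1 > 0" using L g12 g1 by simp
  hence S2: "S < (2*g2 - g1)/2" using k2 Dd by (metis diff_gt_0_iff_gt mult.commute mult_2 add_pos_pos zero_less_mult_pos2)
  have k3: "(g2 - S) * Dd = g1"
  proof -
    have "(g2 - S) * Dd = g2 * Dd - S * Dd" by (simp add: algebra_simps)
    also have "\<dots> = g2 * (2 - \<Lambda> * (g2 - g1)) - (2*g2 - g1 - \<Lambda> * (g2*(g2-g1)))" by (simp only: SD, simp add: Dd_def)
    also have "\<dots> = g1" by (simp add: algebra_simps)
    finally show ?thesis .
  qed
  hence S3: "S < g2" using Dd g1 by (metis diff_gt_0_iff_gt mult.commute zero_less_mult_pos2)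
  have a: "g1/2 < sg" "sg < S" using S1 unfolding sg_def by auto
  show "sg > 0" using a g1 by simp
  show "2 * sg - g1 > 0" using a by simp
  show "2 * sg - (2*g2 - g1) < 0" using a S2 by simp
  have "2 * sg - (2*g2 - g1) + \<Lambda> * (g2*(g2-g1) - sg * (g2-g1)) = Dd * sg - (2*g2 - g1 - \<Lambda> * (g2*(g2-g1)))"
    unfolding Dd_def by (simp add: algebra_simps)
  also have "\<dots> = Dd * sg - S * Dd" by (simp only: SD)
  also have "\<dots> = Dd * (sg - S)" by (simp add: algebra_simps)
  also have "\<dots> < 0" using Dd a by (simp add: mult_pos_neg)
  finally show "2 * sg - (2*g2 - g1) + \<Lambda> * (g2*(g2-g1) - sg * (g2-g1)) < 0" .
  have eq: "((sg * (g1 + g2) - g1 * g2) - sg^2) * \<Lambda> = - \<Lambda> * ((sg - g1) * (sg - g2))"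
    by (simp add: power2_eq_square algebra_simps)
  have sgg2: "sg < g2" using a S3 by simp
  show "g1 + ((sg * (g1 + g2) - g1 * g2) - sg^2) * \<Lambda> > 0"
  proof (cases "sg \<ge> g1")
    case True
    hence "(sg - g1) * (sg - g2) \<le> 0" using sgg2 by (simp add: mult_nonneg_nonpos)
    hence "- \<Lambda> * ((sg - g1) * (sg - g2)) \<ge> 0" using L by (simp add: mult_nonpos_nonpos mult_nonneg_nonpos)
    thus ?thesis unfolding eq using g1 by simp
  next
    case False
    have "(sg - g1) * (sg - g2) = (g1 - sg) * (g2 - sg)" by (simp add: algebra_simps)
    also have "\<dots> \<le> (g1/2) * (g2 - g1/2)"
      using False a sgg2 by (intro mult_mono) auto
    finally have b: "(sg - g1) * (sg - g2) \<le> (g1/2) * (g2 - g1/2)" .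
    have "\<Lambda> * ((sg - g1) * (sg - g2)) \<le> \<Lambda> * ((g1/2) * (g2 - g1/2))" using b L by (intro mult_left_mono) auto
    also have "\<dots> = g1 * (\<Lambda> * (2*g2 - g1)) / 4" by (simp add: algebra_simps)
    also have "\<dots> < g1 * 4 / 4" using La g1 by (intro divide_strict_right_mono mult_strict_left_mono) auto
    finally show ?thesis unfolding eq by simp
  qed
qed

lemma lap_cong: "(\<forall>j<N. x j = y j) \<Longrightarrow> lap N W x = lap N W y"
  unfolding lap_def by (auto intro!: ext sum.cong)

lemma ip_cong: "(\<forall>j<N. x j = y j) \<Longrightarrow> ip N x z = ip N y z"
  unfolding ip_def by (auto intro!: sum.cong)

lemma ip_cong2: "(\<forall>j<N. x j = y j) \<Longrightarrow> ip N z x = ip N z y"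
  unfolding ip_def by (auto intro!: sum.cong)

lemma ip_zero_if: "ip N x x = 0 \<Longrightarrow> i < N \<Longrightarrow> x i = 0"
  unfolding ip_def by (simp add: sum_nonneg_eq_0_iff)

lemma sphere_ext:
  fixes F :: "(nat \<Rightarrow> real) \<Rightarrow> real"
  assumes hom: "\<And>x a. F (\<lambda>i. a * x i) = a^2 * F x"
    and cong: "\<And>x y. (\<forall>i<N. x i = y i) \<Longrightarrow> F x = F y"
    and Pc: "\<And>x a. Pc x \<Longrightarrow> Pc (\<lambda>i. if i < N then a * x i else 0)"
    and H: "\<And>x. (\<forall>i\<ge>N. x i = 0) \<Longrightarrow> (\<Sum>i<N. (x i)^2) = 1 \<Longrightarrow> Pc x \<Longrightarrow> c0 \<le> F x"
    and x: "Pc x"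
  shows "c0 * ip N x x \<le> F x"
proof (cases "ip N x x = 0")
  case True
  have "F x = F (\<lambda>i. 0 * x i)" using ip_zero_if[OF True] by (intro cong) auto
  also have "\<dots> = 0" using hom[where x=x and a=0] by simp
  finally show ?thesis using True by simp
next
  case False
  define r where "r = ip N x x"
  have r: "r > 0" using False ip_self_nonneg[of N x] unfolding r_def by simp
  define y where "y = (\<lambda>i. if i < N then (1 / sqrt r) * x i else 0)"
  have Fy: "F y = F x / r"
  proof -
    have "F y = F (\<lambda>i. (1 / sqrt r) * x i)" unfolding y_def by (intro cong) auto
    also have "\<dots> = (1 / sqrt r)^2 * F x" by (rule hom)
    also have "\<dots> = F x / r" using r by (simp add: power_divide)
    finally show ?thesis .
  qed
  have "(\<Sum>i<N. (y i)^2) = (\<Sum>i<N. (1/r) * (x i * x i))"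
    unfolding y_def using r by (intro sum.cong) (auto simp: power2_eq_square power_divide)
  also have "\<dots> = (1/r) * r" unfolding sum_distrib_left[symmetric] r_def ip_def ..
  also have "\<dots> = 1" using r by simp
  finally have "(\<Sum>i<N. (y i)^2) = 1" .
  hence "c0 \<le> F y" using H[of y] Pc[OF x] unfolding y_def by auto
  hence "c0 \<le> F x / r" using Fy by simp
  thus ?thesis using r unfolding r_def[symmetric] by (simp add: field_simps)
qed

lemma quad_hom: "ip N (\<lambda>i. a * x i) (lap N W (\<lambda>i. a * x i)) = a^2 * ip N x (lap N W x)"
  by (simp add: lap_scale ip_scale_left ip_scale_right power2_eq_square)

lemma quad_cong: "(\<forall>i<N. x i = y i) \<Longrightarrow> ip N x (lap N W x) = ip N y (lap N W y)"
  using lap_cong[of N x y W] ip_cong[of N x y] by simp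

lemma ipself_hom: "ip N (\<lambda>i. a * x i) (\<lambda>i. a * x i) = a^2 * ip N x x"
  by (simp add: ip_scale_left ip_scale_right power2_eq_square)

lemma laplacian_sum:
  assumes i: "i < N" and d: "A i i = 0"
  shows "(\<Sum>j<N. laplacian N A i j * x j) = lap N A x i"
proof -
  have iN: "i \<in> {..<N}" using i by simp
  have "(\<Sum>j<N. laplacian N A i j * x j) = laplacian N A i i * x i + (\<Sum>j\<in>{..<N}-{i}. laplacian N A i j * x j)"
    by (rule sum.remove[OF _ iN]) simp
  also have "\<dots> = (\<Sum>l\<in>{..<N}-{i}. A i l) * x i + (\<Sum>j\<in>{..<N}-{i}. - A i j * x j)"
    by (simp add: laplacian_def)
  also have "\<dots> = (\<Sum>j\<in>{..<N}-{i}. A i j * (x i - x j))"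
  proof -
    have "(\<Sum>j\<in>{..<N}-{i}. A i j * (x i - x j)) = (\<Sum>j\<in>{..<N}-{i}. A i j) * x i - (\<Sum>j\<in>{..<N}-{i}. A i j * x j)"
      by (simp add: right_diff_distrib sum_subtractf sum_distrib_right)
    moreover have "(\<Sum>j\<in>{..<N}-{i}. - A i j * x j) = - (\<Sum>j\<in>{..<N}-{i}. A i j * x j)"
      by (simp add: sum_negf)
    ultimately show ?thesis by simp
  qed
  also have "\<dots> = A i i * (x i - x i) + (\<Sum>j\<in>{..<N}-{i}. A i j * (x i - x j))" by simp
  also have "\<dots> = (\<Sum>j<N. A i j * (x i - x j))"
    by (rule sum.remove[OF _ iN, symmetric]) simp
  finally show ?thesis using i by (simp add: lap_def)
qed

lemma sq_tendsto_zero: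
  fixes f :: "nat \<Rightarrow> real"
  assumes b: "\<And>k. (f k)^2 \<le> C * \<rho>^k" and r0: "0 \<le> \<rho>" and r1: "\<rho> < 1"
  shows "f \<longlonglongrightarrow> 0"
proof -
  have "(\<lambda>k. C * \<rho>^k) \<longlonglongrightarrow> C * 0"
    by (intro tendsto_mult tendsto_const LIMSEQ_power_zero) (use r0 r1 in auto)
  hence "(\<lambda>k. sqrt (C * \<rho>^k)) \<longlonglongrightarrow> sqrt 0" using tendsto_real_sqrt by fastforce
  hence g: "(\<lambda>k. sqrt (C * \<rho>^k)) \<longlonglongrightarrow> 0" by simp
  show ?thesis
  proof (rule Lim_null_comparison[OF _ g])
    show "\<forall>\<^sub>F k in sequentially. norm (f k) \<le> sqrt (C * \<rho>^k)"
    proof (rule always_eventually, rule allI)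
      fix k
      have "norm (f k) = sqrt ((f k)^2)" by simp
      also have "\<dots> \<le> sqrt (C * \<rho>^k)" using b by (rule real_sqrt_le_mono)
      finally show "norm (f k) \<le> sqrt (C * \<rho>^k)" .
    qed
  qed
qed

lemma ip_unit: "i < N \<Longrightarrow> ip N (\<lambda>j. if j = i then 1 else 0) y = y i"
proof -
  assume i: "i < N"
  have "ip N (\<lambda>j. if j = i then 1 else 0) y = (\<Sum>j<N. if j = i then y j else 0)"
    unfolding ip_def by (intro sum.cong) auto
  also have "\<dots> = y i" using i by (simp add: sum.delta)
  finally show ?thesis .
qed

lemma eigen_from_max:
  assumes sy: "symm N A" and mx: "\<forall>y. ip N y (lap N A y) \<le> \<Lambda> * ip N y y"
    and x1: "ip N x x = 1" and xv: "ip N x (lap N A x) = \<Lambda>" and i: "i < N"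
  shows "lap N A x i = \<Lambda> * x i"
proof -
  define z where "z = (\<lambda>j. if j = i then 1 else (0::real))"
  define b where "b = \<Lambda> * ip N x z - ip N z (lap N A x)"
  define cc where "cc = \<Lambda> * ip N z z - ip N z (lap N A z)"
  have "b^2 \<le> 0 * cc"
  proof (rule disc)
    fix t
    have "ip N (\<lambda>j. x j + t * z j) (lap N A (\<lambda>j. x j + t * z j)) \<le> \<Lambda> * ip N (\<lambda>j. x j + t * z j) (\<lambda>j. x j + t * z j)"
      using mx by blast
    moreover have "ip N (\<lambda>j. x j + t * z j) (lap N A (\<lambda>j. x j + t * z j)) =
       ip N x (lap N A x) + 2 * t * ip N z (lap N A x) + t^2 * ip N z (lap N A z)"
      by (simp add: lap_add lap_scale ip_add_left ip_add_right ip_scale_left ip_scale_right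
          lap_sym[OF sy, of x z] power2_eq_square algebra_simps)
    moreover have "ip N (\<lambda>j. x j + t * z j) (\<lambda>j. x j + t * z j) = ip N x x + 2 * t * ip N x z + t^2 * ip N z z"
      by (simp add: ip_add_left ip_add_right ip_scale_left ip_scale_right ip_comm[of N z x] power2_eq_square algebra_simps)
    ultimately show "0 \<le> 0 + 2 * b * t + cc * t^2" unfolding b_def cc_def using x1 xv
      by (simp add: algebra_simps)
  next
    show "0 \<le> cc" unfolding cc_def using mx by simp
  qed
  hence "b = 0" by simp
  moreover have "ip N x z = x i" unfolding z_def using i ip_unit[of i N x] ip_comm by metis
  moreover have "ip N z (lap N A x) = lap N A x i" unfolding z_def using i by (rule ip_unit)
  ultimately show ?thesis unfolding b_def by simp
qed

lemma sq_le_ip: "i < N \<Longrightarrow> (x i)^2 \<le> ip N x x"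
  unfolding ip_def power2_eq_square[symmetric]
  by (rule member_le_sum) auto

lemma diff_sq_le: "i < N \<Longrightarrow> j < N \<Longrightarrow> (x i - x j)^2 \<le> 4 * ip N x x"
proof -
  assume i: "i < N" and j: "j < N"
  have "(x i - x j)^2 \<le> 2 * (x i)^2 + 2 * (x j)^2"
  proof -
    have "2*(x i)^2 + 2*(x j)^2 - (x i - x j)^2 = (x i + x j)^2" by (simp add: power2_eq_square algebra_simps)
    moreover have "0 \<le> (x i + x j)^2" by simp
    ultimately show ?thesis by linarith
  qed
  thus ?thesis using sq_le_ip[OF i, of x] sq_le_ip[OF j, of x] by linarith
qed

lemma sumsq_diff: "(\<Sum>i<N. \<Sum>j<N. (y i - y j)^2) \<le> 4 * real N * ip N y y"
proof -
  have "(\<Sum>i<N. \<Sum>j<N. (y i - y j)^2) \<le> (\<Sum>i<N. \<Sum>j<N. 2 * (y i)^2 + 2 * (y j)^2)"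
  proof (intro sum_mono)
    fix i j
    have "2*(y i)^2 + 2*(y j)^2 - (y i - y j)^2 = (y i + y j)^2" by (simp add: power2_eq_square algebra_simps)
    moreover have "0 \<le> (y i + y j)^2" by simp
    ultimately show "(y i - y j)^2 \<le> 2 * (y i)^2 + 2 * (y j)^2" by linarith
  qed
  also have "\<dots> = 4 * real N * ip N y y"
    by (simp add: ip_def sum.distrib sum_distrib_left power2_eq_square algebra_simps)
  finally show ?thesis .
qed

lemma quad_mono:
  assumes "symm N W" "symm N W'" "\<forall>i<N. \<forall>j<N. W i j \<le> W' i j"
  shows "ip N y (lap N W y) \<le> ip N y (lap N W' y)"
  unfolding lap_quad[OF assms(1)] lap_quad[OF assms(2)]
  using assms(3) by (auto intro!: divide_right_mono sum_mono mult_right_mono)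

lemma quad_plus_const:
  assumes "symm N W"
  shows "ip N y (lap N (\<lambda>i j. W i j + e) y) = ip N y (lap N W y) + e * (\<Sum>i<N. \<Sum>j<N. (y i - y j)^2) / 2"
proof -
  have s: "symm N (\<lambda>i j. W i j + e)" using assms unfolding symm_def by auto
  show ?thesis unfolding lap_quad[OF s] lap_quad[OF assms]
    by (simp add: distrib_right sum.distrib sum_distrib_left add_divide_distrib)
qed

lemma quad_scale:
  assumes "symm N W"
  shows "ip N y (lap N (\<lambda>i j. a * W i j) y) = a * ip N y (lap N W y)"
proof -
  have s: "symm N (\<lambda>i j. a * W i j)" using assms unfolding symm_def by auto
  show ?thesis unfolding lap_quad[OF s] lap_quad[OF assms]
    by (simp add: sum_distrib_left mult.assoc)
qed

lemma prod_bounds: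
  fixes A d x y :: real
  assumes pos: "0 < A - d" and x: "x \<in> {sqrt (A - d)<..<sqrt (A + d)}" and y: "y \<in> {sqrt (A - d)<..<sqrt (A + d)}"
  shows "A - d < x * y" "x * y < A + d"
proof -
  have s0: "0 \<le> sqrt (A - d)" using pos by simp
  have x1: "sqrt (A - d) < x" "x < sqrt (A + d)" and y1: "sqrt (A - d) < y" "y < sqrt (A + d)" using x y by auto
  have x0: "0 < x" and y0: "0 < y" using s0 x1 y1 by linarith+
  have "sqrt (A - d) * sqrt (A - d) < x * y" using s0 x1 y1 x0 y0 by (intro mult_strict_mono) auto
  thus "A - d < x * y" using pos by simp
  have "0 < sqrt (A + d)" using x0 x1 by linarith
  hence Ad: "0 < A + d" by simp
  have "x * y < sqrt (A + d) * sqrt (A + d)" using s0 x1 y1 x0 y0 Ad by (intro mult_strict_mono) auto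
  moreover have "0 \<le> A + d" using Ad by simp
  ultimately show "x * y < A + d" by simp
qed

lemma sum_01:
  fixes N :: nat
  assumes "N \<ge> 2" "\<And>i. i \<ge> 2 \<Longrightarrow> f i = 0"
  shows "(\<Sum>i<N. f i) = f 0 + (f 1 :: real)"
proof -
  have "(\<Sum>i<N. f i) = (\<Sum>i\<in>{0,1}. f i)"
    using assms by (intro sum.mono_neutral_right) auto
  thus ?thesis by simp
qed

lemma cont_quad: "continuous_on UNIV (\<lambda>x::nat\<Rightarrow>real. ip N x (lap N W x))"
  unfolding ip_lap by (intro continuous_on_sum continuous_on_mult continuous_on_diff continuous_on_const continuous_on_product_coordinates)

lemma setup_Lambda:
  fixes N :: nat and A0 :: "nat \<Rightarrow> nat \<Rightarrow> real" and g1 g2 :: real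
  assumes N2: "N \<ge> 2"
    and sym: "\<forall>i<N. \<forall>j<N. A0 i j = A0 j i"
    and nonneg: "\<forall>i<N. \<forall>j<N. A0 i j \<ge> 0"
    and diag: "\<forall>i<N. A0 i i = 0"
    and gam: "g2 > g1" "g1 > 0"
    and eig: "\<forall>\<mu>. lap_eigenvalue N A0 \<mu> \<and> \<mu> \<noteq> 0 \<longrightarrow> g1 - 2 * g2 > - 4 / \<mu>"
  shows "\<exists>\<Lambda>0. 0 \<le> \<Lambda>0 \<and> \<Lambda>0 * (2*g2 - g1) < 4 \<and> (\<forall>y. ip N y (lap N A0 y) \<le> \<Lambda>0 * ip N y y)"
proof -
  have sy: "symm N A0" using sym unfolding symm_def by auto
  define F0 where "F0 = (\<lambda>x. ip N x (lap N A0 x))"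
  define S where "S = {x::nat\<Rightarrow>real. (\<forall>i\<ge>N. x i = 0) \<and> (\<Sum>i<N. (x i)^2) = 1} \<inter> UNIV"
  have ne: "S \<noteq> {}"
  proof -
    have "(\<Sum>i<N. (if i = 0 then 1 else 0::real)^2) = (\<Sum>i<N. if i = 0 then 1 else 0::real)"
      by (intro sum.cong) auto
    also have "\<dots> = 1" using N2 by (simp add: sum.delta)
    finally have "(\<Sum>i<N. (if i = 0 then 1 else 0::real)^2) = 1" .
    hence "(\<lambda>i. if i = 0 then 1 else 0::real) \<in> S" unfolding S_def using N2 by auto
    thus ?thesis by auto
  qed
  obtain x0 where x0S: "x0 \<in> S" and x0max: "\<forall>y\<in>S. F0 y \<le> F0 x0"
    using sphere_max[OF _ closed_UNIV ne S_def] cont_quad unfolding F0_def by blast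
  define \<Lambda>0 where "\<Lambda>0 = F0 x0"
  have x01: "ip N x0 x0 = 1" using x0S unfolding S_def ip_def by (simp add: power2_eq_square)
  have mx: "\<forall>y. ip N y (lap N A0 y) \<le> \<Lambda>0 * ip N y y"
  proof
    fix y
    have "(- \<Lambda>0) * ip N y y \<le> (\<lambda>x. - F0 x) y"
    proof (rule sphere_ext[where Pc = "\<lambda>_. True"])
      show "(\<lambda>x. - F0 x) (\<lambda>i. a * x i) = a^2 * (\<lambda>x. - F0 x) x" for x a
        unfolding F0_def by (simp add: quad_hom)
      show "(\<forall>i<N. x i = y i) \<Longrightarrow> (\<lambda>x. - F0 x) x = (\<lambda>x. - F0 x) y" for x y
        unfolding F0_def using quad_cong by metis
      show "- \<Lambda>0 \<le> (\<lambda>x. - F0 x) x" if "\<forall>i\<ge>N. x i = 0" "(\<Sum>i<N. (x i)^2) = 1" "True" for x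
        using x0max that unfolding S_def \<Lambda>0_def by auto
    qed auto
    thus "ip N y (lap N A0 y) \<le> \<Lambda>0 * ip N y y" unfolding F0_def by simp
  qed
  have ev: "lap N A0 x0 i = \<Lambda>0 * x0 i" if "i < N" for i
    by (rule eigen_from_max[OF sy mx x01 _ that]) (simp add: \<Lambda>0_def F0_def)
  have nz: "\<exists>i<N. x0 i \<noteq> 0"
  proof (rule ccontr)
    assume "\<not> (\<exists>i<N. x0 i \<noteq> 0)"
    hence "ip N x0 x0 = 0" unfolding ip_def by simp
    thus False using x01 by simp
  qed
  have lev: "lap_eigenvalue N A0 \<Lambda>0"
    unfolding lap_eigenvalue_def
  proof (intro exI[of _ x0] conjI allI impI)
    show "\<exists>i<N. x0 i \<noteq> 0" by (rule nz)
    fix i assume i: "i < N"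
    show "(\<Sum>j<N. laplacian N A0 i j * x0 j) = \<Lambda>0 * x0 i"
      using laplacian_sum[OF i, of A0 x0] diag i ev[OF i] by simp
  qed
  have L0: "0 \<le> \<Lambda>0" unfolding \<Lambda>0_def F0_def
    by (rule quad_nonneg[OF sy]) (use nonneg in auto)
  have La: "\<Lambda>0 * (2*g2 - g1) < 4"
  proof (cases "\<Lambda>0 = 0")
    case True thus ?thesis by simp
  next
    case False
    hence Lp: "\<Lambda>0 > 0" using L0 by simp
    have "g1 - 2 * g2 > - 4 / \<Lambda>0" using eig lev False by blast
    hence "\<Lambda>0 * (g1 - 2 * g2) > \<Lambda>0 * (- 4 / \<Lambda>0)" using Lp by (intro mult_strict_left_mono) auto
    thus ?thesis using Lp by (simp add: algebra_simps)
  qed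
  show ?thesis using L0 La mx by blast
qed

lemma setup_c0:
  fixes N :: nat and A0 :: "nat \<Rightarrow> nat \<Rightarrow> real"
  assumes N2: "N \<ge> 2"
    and sym: "\<forall>i<N. \<forall>j<N. A0 i j = A0 j i"
    and conn: "graph_connected N A0"
  defines "E \<equiv> (\<lambda>i j. if A0 i j > 0 then 1 else (0::real))"
  shows "\<exists>c0>0. \<forall>y. (\<Sum>i<N. y i) = 0 \<longrightarrow> c0 * ip N y y \<le> ip N y (lap N E y)"
proof -
  have syE: "symm N E" using sym unfolding symm_def E_def by auto
  have nnE: "\<forall>i<N. \<forall>j<N. E i j \<ge> 0" unfolding E_def by auto
  define FE where "FE = (\<lambda>x. ip N x (lap N E x))"
  define Z where "Z = {x::nat\<Rightarrow>real. (\<Sum>i<N. x i) = 0}"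
  have clZ: "closed Z" unfolding Z_def
    by (intro closed_Collect_eq continuous_on_sum continuous_on_product_coordinates continuous_on_const)
  define S where "S = {x::nat\<Rightarrow>real. (\<forall>i\<ge>N. x i = 0) \<and> (\<Sum>i<N. (x i)^2) = 1} \<inter> Z"
  have ne: "S \<noteq> {}"
  proof -
    define z where "z = (\<lambda>i::nat. if i = 0 then 1 / sqrt 2 else if i = 1 then - (1 / sqrt 2) else (0::real))"
    have "(\<Sum>i<N. z i) = z 0 + z 1" by (rule sum_01[OF N2]) (simp add: z_def)
    hence s0: "(\<Sum>i<N. z i) = 0" by (simp add: z_def)
    have "(\<Sum>i<N. (z i)^2) = (z 0)^2 + (z 1)^2" by (rule sum_01[OF N2]) (simp add: z_def)
    hence s1: "(\<Sum>i<N. (z i)^2) = 1" by (simp add: z_def power_divide)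
    have "z \<in> S" unfolding S_def Z_def using s0 s1 N2 by (auto simp: z_def)
    thus ?thesis by auto
  qed
  have contF: "continuous_on UNIV (\<lambda>x. - FE x)" unfolding FE_def
    by (intro continuous_on_minus cont_quad)
  obtain xm where xmS: "xm \<in> S" and xmmin: "\<forall>y\<in>S. - FE y \<le> - FE xm"
    using sphere_max[OF contF clZ ne S_def] by blast
  define c0 where "c0 = FE xm"
  have c00: "0 \<le> c0" unfolding c0_def FE_def by (rule quad_nonneg[OF syE nnE])
  have c0pos: "c0 > 0"
  proof (rule ccontr)
    assume "\<not> c0 > 0"
    hence "c0 = 0" using c00 by simp
    hence "(\<Sum>i<N. \<Sum>j<N. E i j * (xm i - xm j)^2) / 2 = 0"
      unfolding c0_def FE_def lap_quad[OF syE] .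
    hence zz: "(\<Sum>i<N. \<Sum>j<N. E i j * (xm i - xm j)^2) = 0" by simp
    have nn2: "\<forall>i\<in>{..<N}. 0 \<le> (\<Sum>j<N. E i j * (xm i - xm j)^2)"
      using nnE by (auto intro!: sum_nonneg)
    have z: "\<forall>i\<in>{..<N}. (\<Sum>j<N. E i j * (xm i - xm j)^2) = 0"
      using zz nn2 sum_nonneg_eq_0_iff[of "{..<N}" "\<lambda>i. \<Sum>j<N. E i j * (xm i - xm j)^2"] by blast
    have edge: "xm a = xm b" if ab: "a < N" "b < N" "A0 a b > 0" for a b
    proof -
      have za: "(\<Sum>j<N. E a j * (xm a - xm j)^2) = 0" using z ab by blast
      have nn3: "\<forall>j\<in>{..<N}. 0 \<le> E a j * (xm a - xm j)^2" using nnE ab by auto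
      have "\<forall>j\<in>{..<N}. E a j * (xm a - xm j)^2 = 0"
        using za nn3 sum_nonneg_eq_0_iff[of "{..<N}" "\<lambda>j. E a j * (xm a - xm j)^2"] by blast
      hence "E a b * (xm a - xm b)^2 = 0" using ab by blast
      moreover have "E a b = 1" using ab unfolding E_def by simp
      ultimately show ?thesis by simp
    qed
    have cc: "\<forall>i<N. \<forall>j<N. (\<lambda>a b. a < N \<and> b < N \<and> A0 a b > 0)\<^sup>*\<^sup>* i j"
      using conn unfolding graph_connected_def .
    have all: "xm j = xm 0" if j: "j < N" for j
    proof -
      have "(\<lambda>a b. a < N \<and> b < N \<and> A0 a b > 0)\<^sup>*\<^sup>* 0 j" using cc N2 j by simp
      thus ?thesis
      proof (induction rule: rtranclp_induct)
        case base thus ?case by simp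
      next
        case (step b c)
        have "xm b = xm c" using step.hyps(2) edge by blast
        thus ?case using step.IH by simp
      qed
    qed
    have "(\<Sum>i<N. xm i) = (\<Sum>i<N. xm 0)" by (intro sum.cong refl) (metis all lessThan_iff)
    also have "\<dots> = real N * xm 0" by simp
    finally have "real N * xm 0 = 0" using xmS unfolding S_def Z_def by simp
    hence x00: "xm 0 = 0" using N2 by simp
    have "(\<Sum>i<N. (xm i)^2) = (\<Sum>i<N. (0::real))" by (intro sum.cong refl) (metis all x00 lessThan_iff power_zero_numeral zero_power2)
    thus False using xmS unfolding S_def by simp
  qed
  have "\<forall>y. (\<Sum>i<N. y i) = 0 \<longrightarrow> c0 * ip N y y \<le> ip N y (lap N E y)"
  proof (intro allI impI)
    fix y :: "nat \<Rightarrow> real" assume y: "(\<Sum>i<N. y i) = 0"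
    show "c0 * ip N y y \<le> ip N y (lap N E y)"
    proof (rule sphere_ext[where Pc = "\<lambda>x. (\<Sum>i<N. x i) = 0" and F = FE, unfolded FE_def])
      show "ip N (\<lambda>i. a * x i) (lap N E (\<lambda>i. a * x i)) = a^2 * ip N x (lap N E x)" for x :: "nat \<Rightarrow> real" and a :: real
        by (rule quad_hom)
      show "(\<forall>i<N. x i = y i) \<Longrightarrow> ip N x (lap N E x) = ip N y (lap N E y)" for x y :: "nat \<Rightarrow> real"
        by (rule quad_cong)
      show "(\<Sum>i<N. (if i < N then a * x i else 0)) = 0" if "(\<Sum>i<N. x i) = 0" for x :: "nat \<Rightarrow> real" and a :: real
        using that by (simp add: sum_distrib_left[symmetric])
      show "c0 \<le> ip N x (lap N E x)" if "\<forall>i\<ge>N. x i = 0" "(\<Sum>i<N. (x i)^2) = 1" "(\<Sum>i<N. x i) = 0" for x :: "nat \<Rightarrow> real"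
        using xmmin that unfolding S_def Z_def c0_def FE_def by auto
      show "(\<Sum>i<N. y i) = 0" by (rule y)
    qed
  qed
  thus ?thesis using c0pos by blast
qed

lemma setup_amin:
  fixes N :: nat and A0 :: "nat \<Rightarrow> nat \<Rightarrow> real"
  assumes N2: "N \<ge> 2" and conn: "graph_connected N A0"
  shows "\<exists>amin>0. \<forall>i<N. \<forall>j<N. A0 i j > 0 \<longrightarrow> amin \<le> A0 i j"
proof -
  define Ed where "Ed = {A0 i j | i j. i < N \<and> j < N \<and> A0 i j > 0}"
  have fin: "finite Ed"
  proof -
    have "Ed \<subseteq> (\<lambda>(i,j). A0 i j) ` ({..<N} \<times> {..<N})" unfolding Ed_def by auto
    thus ?thesis by (rule finite_subset) auto
  qed
  have "(\<lambda>a b. a < N \<and> b < N \<and> A0 a b > 0)\<^sup>*\<^sup>* 0 1" using conn N2 unfolding graph_connected_def by auto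
  then have "\<exists>b. b < N \<and> A0 0 b > 0"
  proof (rule converse_rtranclpE)
    assume "0 = (1::nat)" thus ?thesis by simp
  next
    fix b assume "(\<lambda>a b. a < N \<and> b < N \<and> A0 a b > 0) 0 b"
    thus ?thesis by blast
  qed
  then obtain b where "0 < N \<and> b < N \<and> A0 0 b > 0" using N2 by auto
  hence ne: "Ed \<noteq> {}" unfolding Ed_def by blast
  have pos: "Min Ed > 0" using Min_in[OF fin ne] unfolding Ed_def by auto
  have "\<forall>i<N. \<forall>j<N. A0 i j > 0 \<longrightarrow> Min Ed \<le> A0 i j"
    using Min_le[OF fin] unfolding Ed_def by blast
  thus ?thesis using pos by blast
qed

lemma dynamics:
  fixes N :: nat and A0 E :: "nat \<Rightarrow> nat \<Rightarrow> real" and \<gamma>1 \<gamma>2 \<Lambda>0 \<Lambda>1 amin c0 c sg c2 \<rho> d \<epsilon> \<delta> :: real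
    and a \<alpha> :: "nat \<Rightarrow> nat \<Rightarrow> nat \<Rightarrow> real" and p v :: "nat \<Rightarrow> nat \<Rightarrow> real"
  assumes N2: "N \<ge> 2"
    and sym: "\<forall>i<N. \<forall>j<N. A0 i j = A0 j i"
    and diag: "\<forall>i<N. A0 i i = 0"
    and nonneg: "\<forall>i<N. \<forall>j<N. A0 i j \<ge> 0"
    and mx: "\<forall>y. ip N y (lap N A0 y) \<le> \<Lambda>0 * ip N y y"
    and Edef: "E = (\<lambda>i j. if A0 i j > 0 then 1 else 0)"
    and hc0: "\<forall>y. (\<Sum>i<N. y i) = 0 \<longrightarrow> c0 * ip N y y \<le> ip N y (lap N E y)"
    and ham: "\<forall>i<N. \<forall>j<N. A0 i j > 0 \<longrightarrow> amin \<le> A0 i j"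
    and am: "amin > 0" and cdef: "c = amin * c0 / 2"
    and dpos: "\<delta> > 0" and d1: "\<delta> \<le> amin / 2" and d2: "2 * real N * \<delta> \<le> \<Lambda>1 - \<Lambda>0" and d3: "2 * \<delta> \<le> d"
    and r0: "0 \<le> \<rho>" and r1: "\<rho> < 1" and epos: "\<epsilon> > 0"
    and CT: "\<forall>W W' p v. good N \<Lambda>1 c W \<longrightarrow> good N \<Lambda>1 c W' \<longrightarrow> (\<forall>i<N. \<forall>j<N. \<bar>W' i j - W i j\<bar> \<le> d) \<longrightarrow>
       (\<Sum>i<N. p i) = 0 \<longrightarrow> (\<Sum>i<N. v i) = 0 \<longrightarrow>
       Vf N W' \<gamma>1 c2 sg (\<lambda>i. p i + v i) (\<lambda>i. v i - (\<gamma>1 * lap N W p i + \<gamma>2 * lap N W v i))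
         \<le> \<rho> * Vf N W \<gamma>1 c2 sg p v"
    and LB: "\<forall>W p v. good N \<Lambda>1 c W \<longrightarrow> (\<Sum>i<N. p i) = 0 \<longrightarrow> \<epsilon> * (ip N p p + ip N v v) \<le> Vf N W \<gamma>1 c2 sg p v"
    and Hw: "\<forall>k. \<forall>i<N. \<forall>j<N. i \<noteq> j \<longrightarrow>
          (if A0 i j > 0 then
             a k i j = \<alpha> k i j * \<alpha> k j i \<and>
             \<alpha> k i j \<in> {sqrt (A0 i j - \<delta>) <..< sqrt (A0 i j + \<delta>)}
           else a k i j = 0)"
    and Hp: "\<forall>k. \<forall>i<N. p (Suc k) i = p k i + v k i"
    and Hv: "\<forall>k. \<forall>i<N. v (Suc k) i = v k i +
          (\<Sum>j<N. \<gamma>1 * a k i j * (p k j - p k i) + \<gamma>2 * a k i j * (v k j - v k i))"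
  shows "\<forall>i<N. \<forall>j<N. (\<lambda>k. p k i - p k j) \<longlonglongrightarrow> 0 \<and> (\<lambda>k. v k i - v k j) \<longlonglongrightarrow> 0"
proof -
  have Npos: "real N > 0" using N2 by simp
  have syA: "symm N A0" using sym unfolding symm_def by auto
  have syE: "symm N E" using sym unfolding symm_def Edef by auto
  have edge_pos: "A0 i j - \<delta> > 0" if "i < N" "j < N" "A0 i j > 0" for i j
    using ham that d1 am by force
  have wf1: "A0 i j - \<delta> < a k i j \<and> a k i j < A0 i j + \<delta>"
    if ij: "i < N" "j < N" "i \<noteq> j" "A0 i j > 0" for k i j
  proof -
    have s: "A0 j i = A0 i j" using sym ij by auto
    have hh: "(if A0 i j > 0 then a k i j = \<alpha> k i j * \<alpha> k j i \<and>
             \<alpha> k i j \<in> {sqrt (A0 i j - \<delta>) <..< sqrt (A0 i j + \<delta>)} else a k i j = 0)"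
      using Hw ij(1,2,3) by blast
    have h1: "a k i j = \<alpha> k i j * \<alpha> k j i \<and> \<alpha> k i j \<in> {sqrt (A0 i j - \<delta>) <..< sqrt (A0 i j + \<delta>)}"
      using hh by (simp only: ij(4) if_True)
    have ji: "A0 j i > 0" using s ij(4) by simp
    have hh2: "(if A0 j i > 0 then a k j i = \<alpha> k j i * \<alpha> k i j \<and>
             \<alpha> k j i \<in> {sqrt (A0 j i - \<delta>) <..< sqrt (A0 j i + \<delta>)} else a k j i = 0)"
      using Hw ij(1,2,3) by blast
    have h2: "\<alpha> k j i \<in> {sqrt (A0 i j - \<delta>) <..< sqrt (A0 i j + \<delta>)}"
      using hh2 unfolding s by (simp only: ij(4) if_True)
    have h1a: "a k i j = \<alpha> k i j * \<alpha> k j i" and h1b: "\<alpha> k i j \<in> {sqrt (A0 i j - \<delta>) <..< sqrt (A0 i j + \<delta>)}"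
      using h1 by auto
    show ?thesis using prod_bounds[OF edge_pos[OF ij(1,2,4)] h1b h2] h1a by simp
  qed
  have wf0: "a k i j = 0" if ij: "i < N" "j < N" "i \<noteq> j" "\<not> A0 i j > 0" for k i j
    using Hw ij by auto
  have wfs: "a k i j = a k j i" if ij: "i < N" "j < N" "i \<noteq> j" for k i j
  proof (cases "A0 i j > 0")
    case True
    hence "A0 j i > 0" using sym ij by auto
    thus ?thesis using Hw ij True by (auto simp: mult.commute)
  next
    case False
    hence "\<not> A0 j i > 0" using sym ij by auto
    thus ?thesis using wf0 ij False by auto
  qed
  define w where "w = (\<lambda>k i j. if i = j then 0 else a k i j)"
  have wsym: "symm N (w k)" for k unfolding symm_def w_def using wfs by auto
  have wA: "\<bar>w k i j - A0 i j\<bar> \<le> \<delta>" if "i < N" "j < N" for k i j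
  proof (cases "i = j")
    case True thus ?thesis using diag that dpos by (simp add: w_def)
  next
    case False
    show ?thesis
    proof (cases "A0 i j > 0")
      case True
      have "A0 i j - \<delta> < a k i j \<and> a k i j < A0 i j + \<delta>" using wf1[OF that False True] by blast
      thus ?thesis using False by (simp add: w_def abs_le_iff)
    next
      case F: False
      have "A0 i j = 0" using nonneg that F by force
      thus ?thesis using wf0[OF that False F] False dpos by (simp add: w_def)
    qed
  qed
  have wnn: "w k i j \<ge> 0" if "i < N" "j < N" for k i j
  proof (cases "i = j \<or> \<not> A0 i j > 0")
    case True thus ?thesis using wf0 that by (auto simp: w_def)
  next
    case False
    hence "A0 i j - \<delta> < w k i j" using wf1[OF that] by (auto simp: w_def)
    thus ?thesis using edge_pos[OF that] False by simp
  qed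
  have wlo: "(amin / 2) * E i j \<le> w k i j" if "i < N" "j < N" for k i j
  proof (cases "A0 i j > 0")
    case True
    hence ne: "i \<noteq> j" using diag that by auto
    have "A0 i j - \<delta> < w k i j" using wf1[OF that ne True] ne by (simp add: w_def)
    moreover have "amin \<le> A0 i j" using ham that True by auto
    ultimately show ?thesis using True d1 unfolding Edef by simp
  next
    case False thus ?thesis using wnn[OF that] unfolding Edef by simp
  qed
  have wup: "w k i j \<le> A0 i j + \<delta>" if "i < N" "j < N" for k i j
    using wA[where k=k, OF that] by (simp add: abs_le_iff)
  have good: "good N \<Lambda>1 c (w k)" for k
  proof -
  have up: "ip N y (lap N (w k) y) \<le> \<Lambda>1 * ip N y y" for y
  proof -
    have sy2: "symm N (\<lambda>i j. A0 i j + \<delta>)" using syA unfolding symm_def by auto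
    have "ip N y (lap N (w k) y) \<le> ip N y (lap N (\<lambda>i j. A0 i j + \<delta>) y)"
      by (rule quad_mono[OF wsym sy2]) (use wup in auto)
    also have "\<dots> = ip N y (lap N A0 y) + \<delta> * (\<Sum>i<N. \<Sum>j<N. (y i - y j)^2) / 2"
      by (rule quad_plus_const[OF syA])
    also have "\<dots> \<le> \<Lambda>0 * ip N y y + \<delta> * (4 * real N * ip N y y) / 2"
      using mx sumsq_diff[where N=N and y=y] dpos by (intro add_mono divide_right_mono mult_left_mono) auto
    also have "\<dots> = (\<Lambda>0 + 2 * real N * \<delta>) * ip N y y" by (simp add: algebra_simps)
    also have "\<dots> \<le> \<Lambda>1 * ip N y y" using d2 ip_self_nonneg[of N y] by (intro mult_right_mono) auto
    finally show "ip N y (lap N (w k) y) \<le> \<Lambda>1 * ip N y y" .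
  qed
  have low: "c * ip N y y \<le> ip N y (lap N (w k) y)" if y: "(\<Sum>i<N. y i) = 0" for y
  proof -
    have sy3: "symm N (\<lambda>i j. (amin / 2) * E i j)" using syE unfolding symm_def by auto
    have "c * ip N y y = (amin / 2) * (c0 * ip N y y)" unfolding cdef by simp
    also have "\<dots> \<le> (amin / 2) * ip N y (lap N E y)" using hc0 y am by (intro mult_left_mono) auto
    also have "\<dots> = ip N y (lap N (\<lambda>i j. (amin / 2) * E i j) y)" by (rule quad_scale[OF syE, symmetric])
    also have "\<dots> \<le> ip N y (lap N (w k) y)"
      by (rule quad_mono[OF sy3 wsym]) (use wlo in auto)
    finally show "c * ip N y y \<le> ip N y (lap N (w k) y)" .
  qed
  show ?thesis unfolding good_def using wsym[of k] wnn[where k=k] up low by blast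
  qed
  have wdiff: "\<forall>i<N. \<forall>j<N. \<bar>w (Suc k) i j - w k i j\<bar> \<le> d" for k
  proof (intro allI impI)
    fix i j assume "i < N" "j < N"
    hence "\<bar>w (Suc k) i j - A0 i j\<bar> \<le> \<delta>" "\<bar>w k i j - A0 i j\<bar> \<le> \<delta>" using wA by auto
    thus "\<bar>w (Suc k) i j - w k i j\<bar> \<le> d" using d3 by (simp add: abs_le_iff)
  qed
  have ctrl: "(\<Sum>j<N. \<gamma>1 * a k i j * (p k j - p k i) + \<gamma>2 * a k i j * (v k j - v k i))
      = - (\<gamma>1 * lap N (w k) (p k) i + \<gamma>2 * lap N (w k) (v k) i)" if i: "i < N" for k i
  proof -
    have "(\<Sum>j<N. \<gamma>1 * a k i j * (p k j - p k i) + \<gamma>2 * a k i j * (v k j - v k i))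
        = (\<Sum>j<N. - (\<gamma>1 * (w k i j * (p k i - p k j)) + \<gamma>2 * (w k i j * (v k i - v k j))))"
      by (intro sum.cong refl) (simp add: w_def algebra_simps)
    also have "\<dots> = - (\<gamma>1 * lap N (w k) (p k) i + \<gamma>2 * lap N (w k) (v k) i)"
      using i by (simp add: lap_def sum_negf sum_subtractf sum.distrib sum_distrib_left)
    finally show ?thesis .
  qed
  define mp where "mp = (\<lambda>k. (\<Sum>i<N. p k i) / real N)"
  define mv where "mv = (\<lambda>k. (\<Sum>i<N. v k i) / real N)"
  define ep where "ep = (\<lambda>k i. if i < N then p k i - mp k else 0)"
  define ev where "ev = (\<lambda>k i. if i < N then v k i - mv k else 0)"
  have sum_ep: "(\<Sum>i<N. ep k i) = 0" for k
  proof -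
    have "(\<Sum>i<N. ep k i) = (\<Sum>i<N. p k i - mp k)" unfolding ep_def by (intro sum.cong) auto
    also have "\<dots> = 0" unfolding mp_def using Npos by (simp add: sum_subtractf)
    finally show ?thesis .
  qed
  have sum_ev: "(\<Sum>i<N. ev k i) = 0" for k
  proof -
    have "(\<Sum>i<N. ev k i) = (\<Sum>i<N. v k i - mv k)" unfolding ev_def by (intro sum.cong) auto
    also have "\<dots> = 0" unfolding mv_def using Npos by (simp add: sum_subtractf)
    finally show ?thesis .
  qed
  have mp_suc: "mp (Suc k) = mp k + mv k" for k
  proof -
    have "(\<Sum>i<N. p (Suc k) i) = (\<Sum>i<N. p k i + v k i)" using Hp by (intro sum.cong) auto
    thus ?thesis unfolding mp_def mv_def by (simp add: sum.distrib add_divide_distrib)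
  qed
  have vsuc: "v (Suc k) i = v k i - (\<gamma>1 * lap N (w k) (p k) i + \<gamma>2 * lap N (w k) (v k) i)" if "i < N" for k i
    using Hv ctrl[OF that] that by simp
  have mv_suc: "mv (Suc k) = mv k" for k
  proof -
    have "(\<Sum>i<N. v (Suc k) i) = (\<Sum>i<N. v k i - (\<gamma>1 * lap N (w k) (p k) i + \<gamma>2 * lap N (w k) (v k) i))"
      using vsuc by (intro sum.cong) auto
    also have "\<dots> = (\<Sum>i<N. v k i)"
      using lap_sum0[OF wsym[of k], of "p k"] lap_sum0[OF wsym[of k], of "v k"]
      by (simp add: sum_subtractf sum.distrib sum_distrib_left[symmetric])
    finally show ?thesis unfolding mv_def by simp
  qed
  have lap_ep: "lap N (w k) (ep k) = lap N (w k) (p k)" for k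
  proof -
    have "lap N (w k) (ep k) = lap N (w k) (\<lambda>i. p k i - mp k)" by (rule lap_cong) (simp add: ep_def)
    thus ?thesis by (simp add: lap_shift)
  qed
  have lap_ev: "lap N (w k) (ev k) = lap N (w k) (v k)" for k
  proof -
    have "lap N (w k) (ev k) = lap N (w k) (\<lambda>i. v k i - mv k)" by (rule lap_cong) (simp add: ev_def)
    thus ?thesis by (simp add: lap_shift)
  qed
  have ep_suc: "ep (Suc k) = (\<lambda>i. ep k i + ev k i)" for k
    by (rule ext) (simp add: ep_def ev_def Hp mp_suc)
  have ev_suc: "ev (Suc k) = (\<lambda>i. ev k i - (\<gamma>1 * lap N (w k) (ep k) i + \<gamma>2 * lap N (w k) (ev k) i))" for k
  proof (rule ext)
    fix i
    show "ev (Suc k) i = ev k i - (\<gamma>1 * lap N (w k) (ep k) i + \<gamma>2 * lap N (w k) (ev k) i)"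
    proof (cases "i < N")
      case True thus ?thesis unfolding lap_ep lap_ev by (simp add: ev_def vsuc mv_suc)
    next
      case False thus ?thesis by (simp add: ev_def lap_def)
    qed
  qed
  define Wk where "Wk = (\<lambda>k. Vf N (w k) \<gamma>1 c2 sg (ep k) (ev k))"
  have Wstep: "Wk (Suc k) \<le> \<rho> * Wk k" for k
    using CT good[of k] good[of "Suc k"] wdiff[of k] sum_ep[of k] sum_ev[of k]
    unfolding Wk_def ep_suc ev_suc by blast
  have Wbound: "Wk k \<le> \<rho>^k * Wk 0" for k
  proof (induction k)
    case 0 thus ?case by simp
  next
    case (Suc k)
    have "Wk (Suc k) \<le> \<rho> * Wk k" by (rule Wstep)
    also have "\<dots> \<le> \<rho> * (\<rho>^k * Wk 0)" using Suc r0 by (intro mult_left_mono) auto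
    finally show ?case by (simp add: mult.assoc)
  qed
  have Wlow: "\<epsilon> * (ip N (ep k) (ep k) + ip N (ev k) (ev k)) \<le> Wk k" for k
    using LB good[of k] sum_ep[of k] unfolding Wk_def by blast
  have bnd_p: "(ep k i - ep k j)^2 \<le> (4 * Wk 0 / \<epsilon>) * \<rho>^k" if "i < N" "j < N" for k i j
  proof -
    have "(ep k i - ep k j)^2 \<le> 4 * ip N (ep k) (ep k)" by (rule diff_sq_le[OF that])
    also have "\<dots> \<le> 4 * (Wk k / \<epsilon>)"
    proof -
      have "\<epsilon> * ip N (ep k) (ep k) \<le> Wk k" using Wlow[of k] ip_self_nonneg[of N "ev k"] epos
        by (smt (verit) mult_nonneg_nonneg distrib_left)
      thus ?thesis using epos by (simp add: field_simps)
    qed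
    also have "\<dots> \<le> 4 * (\<rho>^k * Wk 0 / \<epsilon>)" using Wbound[of k] epos by (simp add: divide_right_mono)
    finally show ?thesis by (simp add: field_simps)
  qed
  have bnd_v: "(ev k i - ev k j)^2 \<le> (4 * Wk 0 / \<epsilon>) * \<rho>^k" if "i < N" "j < N" for k i j
  proof -
    have "(ev k i - ev k j)^2 \<le> 4 * ip N (ev k) (ev k)" by (rule diff_sq_le[OF that])
    also have "\<dots> \<le> 4 * (Wk k / \<epsilon>)"
    proof -
      have "\<epsilon> * ip N (ev k) (ev k) \<le> Wk k" using Wlow[of k] ip_self_nonneg[of N "ep k"] epos
        by (smt (verit) mult_nonneg_nonneg distrib_left)
      thus ?thesis using epos by (simp add: field_simps)
    qed
    also have "\<dots> \<le> 4 * (\<rho>^k * Wk 0 / \<epsilon>)" using Wbound[of k] epos by (simp add: divide_right_mono)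
    finally show ?thesis by (simp add: field_simps)
  qed
  show ?thesis
  proof (intro allI impI conjI)
    fix i j assume ij: "i < N" "j < N"
    have "p k i - p k j = ep k i - ep k j" for k using ij by (simp add: ep_def)
    hence "(p k i - p k j)^2 \<le> (4 * Wk 0 / \<epsilon>) * \<rho>^k" for k using bnd_p[OF ij] by simp
    thus "(\<lambda>k. p k i - p k j) \<longlonglongrightarrow> 0" by (rule sq_tendsto_zero[OF _ r0 r1])
    have "v k i - v k j = ev k i - ev k j" for k using ij by (simp add: ev_def)
    hence "(v k i - v k j)^2 \<le> (4 * Wk 0 / \<epsilon>) * \<rho>^k" for k using bnd_v[OF ij] by simp
    thus "(\<lambda>k. v k i - v k j) \<longlonglongrightarrow> 0" by (rule sq_tendsto_zero[OF _ r0 r1])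
  qed
qed

theorem theorem3:
  fixes N :: nat and A0 :: "nat \<Rightarrow> nat \<Rightarrow> real" and \<gamma>1 \<gamma>2 :: real
  assumes sym: "\<forall>i<N. \<forall>j<N. A0 i j = A0 j i"
    and nonneg: "\<forall>i<N. \<forall>j<N. A0 i j \<ge> 0"
    and diag: "\<forall>i<N. A0 i i = 0"
    and conn: "graph_connected N A0"
    and gam: "\<gamma>2 > \<gamma>1" "\<gamma>1 > 0"
    and eig: "\<forall>\<mu>. lap_eigenvalue N A0 \<mu> \<and> \<mu> \<noteq> 0 \<longrightarrow> \<gamma>1 - 2 * \<gamma>2 > - 4 / \<mu>"
  shows "\<exists>\<delta>>0. (\<forall>i<N. \<forall>j<N. A0 i j > 0 \<longrightarrow> \<delta> < A0 i j) \<and>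
    (\<forall>(a :: nat \<Rightarrow> nat \<Rightarrow> nat \<Rightarrow> real) (\<alpha> :: nat \<Rightarrow> nat \<Rightarrow> nat \<Rightarrow> real)
        (p :: nat \<Rightarrow> nat \<Rightarrow> real) (v :: nat \<Rightarrow> nat \<Rightarrow> real).
      (\<forall>k. \<forall>i<N. \<forall>j<N. i \<noteq> j \<longrightarrow>
          (if A0 i j > 0 then
             a k i j = \<alpha> k i j * \<alpha> k j i \<and>
             \<alpha> k i j \<in> {sqrt (A0 i j - \<delta>) <..< sqrt (A0 i j + \<delta>)}
           else a k i j = 0)) \<and>
      (\<forall>k. \<forall>i<N. p (Suc k) i = p k i + v k i) \<and>
      (\<forall>k. \<forall>i<N. v (Suc k) i = v k i +
          (\<Sum>j<N. \<gamma>1 * a k i j * (p k j - p k i) + \<gamma>2 * a k i j * (v k j - v k i)))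
      \<longrightarrow> (\<forall>i<N. \<forall>j<N. (\<lambda>k. p k i - p k j) \<longlonglongrightarrow> 0 \<and> (\<lambda>k. v k i - v k j) \<longlonglongrightarrow> 0))"
proof (cases "N < 2")
  case True
  have eqij: "\<forall>i<N. \<forall>j<N. i = j" using True by auto
  show ?thesis
  proof (intro exI[of _ "1::real"] conjI allI impI)
    show "(0::real) < 1" by simp
    show "\<And>i j. i < N \<Longrightarrow> j < N \<Longrightarrow> 0 < A0 i j \<Longrightarrow> 1 < A0 i j" using eqij diag by fastforce
    fix a \<alpha> :: "nat \<Rightarrow> nat \<Rightarrow> nat \<Rightarrow> real" and p v :: "nat \<Rightarrow> nat \<Rightarrow> real" and i j :: nat
    assume "i < N" "j < N"
    hence "i = j" using eqij by auto
    thus "(\<lambda>k. p k i - p k j) \<longlonglongrightarrow> 0" "(\<lambda>k. v k i - v k j) \<longlonglongrightarrow> 0" by simp_all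
  qed
next
  case False
  hence N2: "N \<ge> 2" by simp
  obtain \<Lambda>0 where L0: "0 \<le> \<Lambda>0" and La: "\<Lambda>0 * (2*\<gamma>2 - \<gamma>1) < 4"
    and mx: "\<forall>y. ip N y (lap N A0 y) \<le> \<Lambda>0 * ip N y y"
    using setup_Lambda[OF N2 sym nonneg diag gam eig] by blast
  define E where "E = (\<lambda>i j. if A0 i j > 0 then 1 else (0::real))"
  obtain c0 where c0: "c0 > 0" and hc0: "\<forall>y. (\<Sum>i<N. y i) = 0 \<longrightarrow> c0 * ip N y y \<le> ip N y (lap N E y)"
    using setup_c0[OF N2 sym conn] unfolding E_def by blast
  obtain amin where am: "amin > 0" and ham: "\<forall>i<N. \<forall>j<N. A0 i j > 0 \<longrightarrow> amin \<le> A0 i j"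
    using setup_amin[OF N2 conn] by blast
  define al where "al = 2*\<gamma>2 - \<gamma>1"
  have al: "al > 0" unfolding al_def using gam by simp
  have L04: "\<Lambda>0 < 4 / al" using La al unfolding al_def[symmetric] by (simp add: pos_less_divide_eq mult.commute)
  define \<Lambda>1 where "\<Lambda>1 = (\<Lambda>0 + 4 / al) / 2"
  have L1pos: "\<Lambda>1 > 0" unfolding \<Lambda>1_def using L0 al by (simp add: add_nonneg_pos)
  have L01: "\<Lambda>0 < \<Lambda>1" unfolding \<Lambda>1_def using L04 by simp
  have L1a: "\<Lambda>1 * (2*\<gamma>2 - \<gamma>1) < 4"
  proof -
    have "\<Lambda>1 < 4 / al" unfolding \<Lambda>1_def using L04 by simp
    thus ?thesis using al unfolding al_def[symmetric] by (simp add: pos_less_divide_eq mult.commute)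
  qed
  define c where "c = amin * c0 / 2"
  have cpos: "c > 0" unfolding c_def using am c0 by simp
  define sg where "sg = (\<gamma>1/2 + (2*\<gamma>2 - \<gamma>1 - \<Lambda>1 * (\<gamma>2*(\<gamma>2-\<gamma>1))) / (2 - \<Lambda>1 * (\<gamma>2 - \<gamma>1))) / 2"
  have sgf: "sg > 0" "2 * sg - \<gamma>1 > 0" "2 * sg - (2*\<gamma>2 - \<gamma>1) < 0"
    "2 * sg - (2*\<gamma>2 - \<gamma>1) + \<Lambda>1 * (\<gamma>2*(\<gamma>2-\<gamma>1) - sg * (\<gamma>2-\<gamma>1)) < 0"
    "\<gamma>1 + ((sg * (\<gamma>1 + \<gamma>2) - \<gamma>1 * \<gamma>2) - sg^2) * \<Lambda>1 > 0"
    unfolding sg_def using sg_choice[OF gam(2) gam(1) L1pos L1a] by auto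
  define c2 where "c2 = sg * (\<gamma>1 + \<gamma>2) - \<gamma>1 * \<gamma>2"
  have kap: "\<gamma>1 + (c2 - sg^2) * \<Lambda>1 > 0" using sgf(5) unfolding c2_def .
  obtain \<rho> d \<epsilon> where r: "0 < d" "d \<le> 1" "0 \<le> \<rho>" "\<rho> < 1" "0 < \<epsilon>"
    and CT: "\<forall>W W' p v. good N \<Lambda>1 c W \<longrightarrow> good N \<Lambda>1 c W' \<longrightarrow> (\<forall>i<N. \<forall>j<N. \<bar>W' i j - W i j\<bar> \<le> d) \<longrightarrow>
       (\<Sum>i<N. p i) = 0 \<longrightarrow> (\<Sum>i<N. v i) = 0 \<longrightarrow>
       Vf N W' \<gamma>1 c2 sg (\<lambda>i. p i + v i) (\<lambda>i. v i - (\<gamma>1 * lap N W p i + \<gamma>2 * lap N W v i))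
         \<le> \<rho> * Vf N W \<gamma>1 c2 sg p v"
    and LB: "\<forall>W p v. good N \<Lambda>1 c W \<longrightarrow> (\<Sum>i<N. p i) = 0 \<longrightarrow> \<epsilon> * (ip N p p + ip N v v) \<le> Vf N W \<gamma>1 c2 sg p v"
    using contraction[OF gam(2) gam(1) L1pos cpos sgf(2) c2_def sgf(3) sgf(4) kap sgf(1), where N=N]
    by blast
  define \<delta> where "\<delta> = min (amin / 2) (min ((\<Lambda>1 - \<Lambda>0) / (2 * real N)) (d / 2))"
  have Npos: "real N > 0" using N2 by simp
  have dpos: "\<delta> > 0" unfolding \<delta>_def using am L01 Npos r(1) by simp
  have d1: "\<delta> \<le> amin / 2" unfolding \<delta>_def by simp
  have d2: "2 * real N * \<delta> \<le> \<Lambda>1 - \<Lambda>0"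
  proof -
    have "\<delta> \<le> (\<Lambda>1 - \<Lambda>0) / (2 * real N)" unfolding \<delta>_def by simp
    thus ?thesis using Npos by (simp add: field_simps)
  qed
  have d3: "2 * \<delta> \<le> d" unfolding \<delta>_def by simp
  show ?thesis
  proof (intro exI[of _ \<delta>] conjI allI impI)
    show "\<delta> > 0" by (rule dpos)
    show "\<And>i j. i < N \<Longrightarrow> j < N \<Longrightarrow> 0 < A0 i j \<Longrightarrow> \<delta> < A0 i j"
      using ham d1 am by fastforce
    fix a \<alpha> :: "nat \<Rightarrow> nat \<Rightarrow> nat \<Rightarrow> real" and p v :: "nat \<Rightarrow> nat \<Rightarrow> real"
    assume H: "(\<forall>k. \<forall>i<N. \<forall>j<N. i \<noteq> j \<longrightarrow>
          (if A0 i j > 0 then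
             a k i j = \<alpha> k i j * \<alpha> k j i \<and>
             \<alpha> k i j \<in> {sqrt (A0 i j - \<delta>) <..< sqrt (A0 i j + \<delta>)}
           else a k i j = 0)) \<and>
      (\<forall>k. \<forall>i<N. p (Suc k) i = p k i + v k i) \<and>
      (\<forall>k. \<forall>i<N. v (Suc k) i = v k i +
          (\<Sum>j<N. \<gamma>1 * a k i j * (p k j - p k i) + \<gamma>2 * a k i j * (v k j - v k i)))"
    from H have Hw: "\<forall>k. \<forall>i<N. \<forall>j<N. i \<noteq> j \<longrightarrow>
          (if A0 i j > 0 then
             a k i j = \<alpha> k i j * \<alpha> k j i \<and>
             \<alpha> k i j \<in> {sqrt (A0 i j - \<delta>) <..< sqrt (A0 i j + \<delta>)}
           else a k i j = 0)" by (rule conjunct1)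
    from H have Hp: "\<forall>k. \<forall>i<N. p (Suc k) i = p k i + v k i" by blast
    from H have Hv: "\<forall>k. \<forall>i<N. v (Suc k) i = v k i +
          (\<Sum>j<N. \<gamma>1 * a k i j * (p k j - p k i) + \<gamma>2 * a k i j * (v k j - v k i))" by blast
    have res: "\<forall>i<N. \<forall>j<N. (\<lambda>k. p k i - p k j) \<longlonglongrightarrow> 0 \<and> (\<lambda>k. v k i - v k j) \<longlonglongrightarrow> 0"
      by (rule dynamics[OF N2 sym diag nonneg mx E_def hc0 ham am c_def dpos d1 d2 d3 r(3) r(4) r(5) CT LB Hw Hp Hv])
    fix i j assume "i < N" "j < N"
    thus "(\<lambda>k. p k i - p k j) \<longlonglongrightarrow> 0" "(\<lambda>k. v k i - v k j) \<longlonglongrightarrow> 0" using res by blast+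
  qed
qed

end
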